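(* Let $(X,\mu,S,T)$ be a free, magic, ergodic system with commuting transformations and let $\mathcal W=\mathcal I_S\vee\mathcal I_T$. Then the $\sigma$-algebra $\mathcal I_{T\times T}$ of $(T\times T)$-invariant sets of $(X^2,\mu_S)$ is measurable with respect to $\mathcal W\otimes\mathcal W$ (mod $\mu_S$-null sets); equivalently, for all $f_0,f_1\in L^\infty(\mu)$, \[\mathbb E(f_0\otimes f_1|\mathcal I_{T\times T})=\mathbb E\big(\mathbb E(f_0|\mathcal W)\otimes\mathbb E(f_1|\mathcal W)\,\big|\,\mathcal I_{T\times T}\big)\quad \mu_S\text{-a.e.}\]
   Context: $\mathcal I_R$ is the $\sigma$-algebra of $R$-invariant sets. $\mu_S$ is the measure on $X^2$ with $\int f_0\otimes f_1\,d\mu_S=\int\mathbb E(f_0|\mathcal I_S)\mathbb E(f_1|\mathcal I_S)\,d\mu$; it is invariant under $T\times T$. $\mu_{S,T}$ on $X^4$: $\int f_0\otimes f_1\otimes f_2\otimes f_3\,d\mu_{S,T}=\int\mathbb E(f_0\otimes f_1|\mathcal I_{T\times T})\mathbb E(f_2\otimes f_3|\mathcal I_{T\times T})\,d\mu_S$. $\|f\|_{\mu,S,T}=(\int f^{\otimes4}d\mu_{S,T})^{1/4}$. Magic: $\mathbb E(f|\mathcal I_S\vee\mathcal I_T)=0$ iff $\|f\|_{\mu,S,T}=0$. Free: $S^iT^j\neq{\rm id}$ for $(i,j)\neq(0,0)$. *)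

theory Defs
  imports "HOL-Probability.Probability"
begin

definition mpt :: "'a measure \<Rightarrow> ('a \<Rightarrow> 'a) \<Rightarrow> bool" where
  "mpt M T \<longleftrightarrow> T \<in> measurable M M \<and> distr M M T = M"

definition inv_mpt :: "'a measure \<Rightarrow> ('a \<Rightarrow> 'a) \<Rightarrow> bool" where
  "inv_mpt M T \<longleftrightarrow> mpt M T \<and> bij_betw T (space M) (space M)
      \<and> the_inv_into (space M) T \<in> measurable M M"

definition inv_sets :: "'a measure \<Rightarrow> ('a \<Rightarrow> 'a) \<Rightarrow> 'a set set" where
  "inv_sets M T = {A \<in> sets M. T -` A \<inter> space M = A}"

definition Inv :: "'a measure \<Rightarrow> ('a \<Rightarrow> 'a) \<Rightarrow> 'a measure" where
  "Inv M T = sigma (space M) (inv_sets M T)"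

definition Wjoin :: "'a measure \<Rightarrow> ('a \<Rightarrow> 'a) \<Rightarrow> ('a \<Rightarrow> 'a) \<Rightarrow> 'a measure" where
  "Wjoin M S T = sigma (space M) (inv_sets M S \<union> inv_sets M T)"

text \<open>Bounded measurable real functions (representatives of L-infinity).\<close>
definition bdd_meas :: "'a measure \<Rightarrow> ('a \<Rightarrow> real) \<Rightarrow> bool" where
  "bdd_meas M f \<longleftrightarrow> f \<in> borel_measurable M \<and> (\<exists>B. \<forall>x\<in>space M. \<bar>f x\<bar> \<le> B)"

definition tensor :: "('a \<Rightarrow> real) \<Rightarrow> ('a \<Rightarrow> real) \<Rightarrow> 'a \<times> 'a \<Rightarrow> real" where
  "tensor f g = (\<lambda>z. f (fst z) * g (snd z))"

definition is_muS :: "'a measure \<Rightarrow> ('a \<Rightarrow> 'a) \<Rightarrow> ('a \<times> 'a) measure \<Rightarrow> bool" where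
  "is_muS M S \<mu>S \<longleftrightarrow> prob_space \<mu>S \<and> sets \<mu>S = sets (M \<Otimes>\<^sub>M M) \<and>
     (\<forall>f0 f1. bdd_meas M f0 \<longrightarrow> bdd_meas M f1 \<longrightarrow>
        integral\<^sup>L \<mu>S (tensor f0 f1)
        = integral\<^sup>L M (\<lambda>x. real_cond_exp M (Inv M S) f0 x * real_cond_exp M (Inv M S) f1 x))"

text \<open>Fourth power of the seminorm: by definition of mu_{S,T} with f0=f1=f2=f3=f,
  the integral of f tensor 4 is the integral of E(f tensor f | I_{TxT})^2 dmu_S.\<close>
definition seminorm4 :: "'a measure \<Rightarrow> ('a \<Rightarrow> 'a) \<Rightarrow> ('a \<times> 'a) measure \<Rightarrow> ('a \<Rightarrow> real) \<Rightarrow> real" where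
  "seminorm4 M T \<mu>S f = integral\<^sup>L \<mu>S (\<lambda>z. (real_cond_exp \<mu>S (Inv \<mu>S (map_prod T T)) (tensor f f) z)\<^sup>2)"

definition magic :: "'a measure \<Rightarrow> ('a \<Rightarrow> 'a) \<Rightarrow> ('a \<Rightarrow> 'a) \<Rightarrow> bool" where
  "magic M S T \<longleftrightarrow> (\<forall>\<mu>S. is_muS M S \<mu>S \<longrightarrow> (\<forall>f. bdd_meas M f \<longrightarrow>
      ((AE x in M. real_cond_exp M (Wjoin M S T) f x = 0) \<longleftrightarrow> seminorm4 M T \<mu>S f = 0)))"

text \<open>Free: S^i T^j is not the identity (mod mu) for (i,j) ~= (0,0); for invertible S,T
  this is: S^a T^b ~= S^c T^d a.e. whenever (a,b) ~= (c,d) in N^2.\<close>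
definition free :: "'a measure \<Rightarrow> ('a \<Rightarrow> 'a) \<Rightarrow> ('a \<Rightarrow> 'a) \<Rightarrow> bool" where
  "free M S T \<longleftrightarrow> (\<forall>a b c d::nat. (a, b) \<noteq> (c, d) \<longrightarrow>
      \<not> (AE x in M. (S ^^ a) ((T ^^ b) x) = (S ^^ c) ((T ^^ d) x)))"

definition ergodic2 :: "'a measure \<Rightarrow> ('a \<Rightarrow> 'a) \<Rightarrow> ('a \<Rightarrow> 'a) \<Rightarrow> bool" where
  "ergodic2 M S T \<longleftrightarrow> (\<forall>A \<in> inv_sets M S \<inter> inv_sets M T. emeasure M A = 0 \<or> emeasure M A = 1)"

definition comm_system :: "'a measure \<Rightarrow> ('a \<Rightarrow> 'a) \<Rightarrow> ('a \<Rightarrow> 'a) \<Rightarrow> bool" where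
  "comm_system M S T \<longleftrightarrow> prob_space M \<and> inv_mpt M S \<and> inv_mpt M T \<and>
      (\<forall>x\<in>space M. S (T x) = T (S x))"

end

theory Submission
  imports Defs
begin


lemma integrable_AE_bounded:
  fixes f :: "'a \<Rightarrow> real"
  assumes "finite_measure M" "f \<in> borel_measurable M" "AE x in M. \<bar>f x\<bar> \<le> B"
  shows "integrable M f"
proof -
  interpret finite_measure M by fact
  show ?thesis
    by (rule Bochner_Integration.integrable_bound[where f="\<lambda>_. B"]) (use assms in auto)
qed

lemma quad_discr:
  fixes a b c :: real
  assumes "\<And>t. 0 \<le> a - 2 * t * b + t^2 * c" "0 \<le> c"
  shows "b^2 \<le> a * c"
proof (cases "c > 0")
  case True
  have "0 \<le> a - 2 * (b/c) * b + (b/c)^2 * c" by (rule assms)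
  also have "\<dots> = a - b^2 / c" using True by (simp add: power2_eq_square field_simps)
  finally show ?thesis using True by (simp add: field_simps)
next
  case False
  have c0: "c = 0" using False assms(2) by simp
  show ?thesis
  proof (cases "b = 0")
    case True
    then show ?thesis using c0 by simp
  next
    case False
    have "0 \<le> a - 2 * ((a+1)/(2*b)) * b + ((a+1)/(2*b))^2 * c" by (rule assms)
    then have "0 \<le> a - (a+1)" using False c0 by (simp add: field_simps)
    then show ?thesis by simp
  qed
qed

lemma integral_cauchy_schwarz:
  fixes f g :: "'a \<Rightarrow> real"
  assumes [simp]: "integrable M (\<lambda>x. (f x)^2)" "integrable M (\<lambda>x. (g x)^2)" "integrable M (\<lambda>x. f x * g x)"
  shows "(\<integral>x. f x * g x \<partial>M)^2 \<le> (\<integral>x. (f x)^2 \<partial>M) * (\<integral>x. (g x)^2 \<partial>M)"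
proof (rule quad_discr)
  fix t :: real
  have "0 \<le> (\<integral>x. (f x - t * g x)^2 \<partial>M)" by simp
  also have "(\<integral>x. (f x - t * g x)^2 \<partial>M) = (\<integral>x. (f x)^2 - 2 * t * (f x * g x) + t^2 * (g x)^2 \<partial>M)"
    by (rule Bochner_Integration.integral_cong) (auto simp: power2_eq_square algebra_simps)
  also have "\<dots> = (\<integral>x. (f x)^2 \<partial>M) - 2 * t * (\<integral>x. f x * g x \<partial>M) + t^2 * (\<integral>x. (g x)^2 \<partial>M)"
    by simp
  finally show "0 \<le> (\<integral>x. (f x)^2 \<partial>M) - 2 * t * (\<integral>x. f x * g x \<partial>M) + t^2 * (\<integral>x. (g x)^2 \<partial>M)" .
qed simp


lemma sets_Inv: "sets (Inv M T) = sigma_sets (space M) (inv_sets M T)"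
  unfolding Inv_def inv_sets_def
  by (rule sets_measure_of) (auto dest: sets.sets_into_space)

lemma space_Inv: "space (Inv M T) = space M"
  unfolding Inv_def inv_sets_def
  by (rule space_measure_of) (auto dest: sets.sets_into_space)

lemma subalg_Inv: "subalgebra M (Inv M T)"
  unfolding subalgebra_def sets_Inv space_Inv
  by (auto intro!: sets.sigma_sets_subset simp: inv_sets_def)

lemma inv_sets_in_Inv: "A \<in> inv_sets M T \<Longrightarrow> A \<in> sets (Inv M T)"
  unfolding sets_Inv by auto

lemma Inv_sets_invariant:
  assumes "T \<in> space M \<rightarrow> space M" "A \<in> sets (Inv M T)"
  shows "A \<in> sets M \<and> T -` A \<inter> space M = A"
proof -
  have "A \<in> sigma_sets (space M) (inv_sets M T)" using assms(2) sets_Inv by metis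
  then show ?thesis
  proof induction
    case (Basic a) then show ?case by (auto simp: inv_sets_def)
  next
    case Empty then show ?case by auto
  next
    case (Compl a) then show ?case using assms(1) by auto
  next
    case (Union a)
    then have "(\<Union>i. a i) \<in> sets M" by auto
    moreover have "T -` (\<Union>i. a i) \<inter> space M = (\<Union>i. a i)"
      using Union by (auto simp: set_eq_iff)
    ultimately show ?case by simp
  qed
qed

lemma Inv_measurable_invariant:
  fixes \<phi> :: "'a \<Rightarrow> real"
  assumes "T \<in> space M \<rightarrow> space M" "\<phi> \<in> borel_measurable (Inv M T)" "x \<in> space M"
  shows "\<phi> (T x) = \<phi> x"
proof -
  let ?A = "\<phi> -` {\<phi> x} \<inter> space (Inv M T)"
  have "?A \<in> sets (Inv M T)" by (rule measurable_sets[OF assms(2)]) simp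
  then have "T -` ?A \<inter> space M = ?A" using Inv_sets_invariant[OF assms(1)] by blast
  moreover have "x \<in> ?A" using assms(3) by (simp add: space_Inv)
  ultimately show ?thesis by blast
qed

lemma invariant_Inv_measurable:
  assumes "T \<in> space M \<rightarrow> space M" "h \<in> borel_measurable M" "\<And>x. x \<in> space M \<Longrightarrow> h (T x) = h x"
  shows "h \<in> borel_measurable (Inv M T)"
proof (rule borel_measurableI)
  fix U :: "'b set" assume "open U"
  have "h -` U \<inter> space M \<in> sets M" using assms(2) \<open>open U\<close> by (simp add: borel_open measurable_sets)
  moreover have "T -` (h -` U \<inter> space M) \<inter> space M = h -` U \<inter> space M"
    using assms(1,3) by auto
  ultimately have "h -` U \<inter> space M \<in> inv_sets M T" by (simp add: inv_sets_def)
  then show "h -` U \<inter> space (Inv M T) \<in> sets (Inv M T)"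
    using inv_sets_in_Inv space_Inv by metis
qed

lemma fin_subalg_Inv:
  assumes "finite_measure M"
  shows "sigma_finite_subalgebra M (Inv M T)"
  by (rule finite_measure_subalgebra_is_sigma_finite)
     (simp add: finite_measure_subalgebra_def finite_measure_subalgebra_axioms_def assms subalg_Inv)

lemma commute_Inv_measurable:
  assumes "R \<in> measurable M M" "S \<in> space M \<rightarrow> space M" "\<And>x. x \<in> space M \<Longrightarrow> R (S x) = S (R x)"
  shows "R \<in> measurable (Inv M S) (Inv M S)"
proof -
  have Rsp: "R \<in> space M \<rightarrow> space M" using assms(1) by (simp add: measurable_def)
  show ?thesis
    unfolding Inv_def
  proof (rule measurable_measure_of)
    show "inv_sets M S \<subseteq> Pow (space M)" by (auto simp: inv_sets_def dest: sets.sets_into_space)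
    show "R \<in> space (sigma (space M) (inv_sets M S)) \<rightarrow> space M"
      using Rsp space_Inv[of M S] by (simp add: Inv_def)
    fix A assume A: "A \<in> inv_sets M S"
    have sp: "space (sigma (space M) (inv_sets M S)) = space M" using space_Inv[of M S] by (simp add: Inv_def)
    have "R -` A \<inter> space M \<in> sets M" using A assms(1) by (auto simp: inv_sets_def)
    moreover have "S -` (R -` A \<inter> space M) \<inter> space M = R -` A \<inter> space M"
    proof -
      have "S -` A \<inter> space M = A" using A by (simp add: inv_sets_def)
      then show ?thesis using assms(2,3) Rsp by (auto simp: set_eq_iff Pi_iff)
    qed
    ultimately have "R -` A \<inter> space M \<in> inv_sets M S" by (simp add: inv_sets_def)
    then show "R -` A \<inter> space (sigma (space M) (inv_sets M S)) \<in> sets (sigma (space M) (inv_sets M S))"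
      using inv_sets_in_Inv[of _ M S] by (simp add: sp Inv_def)
  qed
qed


locale sys =
  fixes M :: "'a measure" and S T :: "'a \<Rightarrow> 'a" and \<mu>S :: "('a \<times> 'a) measure"
  assumes comm: "comm_system M S T" and muS: "is_muS M S \<mu>S"
begin

lemma probM: "prob_space M" using comm by (simp add: comm_system_def)
lemma S_meas[measurable]: "S \<in> measurable M M" using comm by (simp add: comm_system_def inv_mpt_def mpt_def)
lemma T_meas[measurable]: "T \<in> measurable M M" using comm by (simp add: comm_system_def inv_mpt_def mpt_def)
lemma T_distr: "distr M M T = M" using comm by (simp add: comm_system_def inv_mpt_def mpt_def)
lemma T_bij: "bij_betw T (space M) (space M)" using comm by (simp add: comm_system_def inv_mpt_def)
lemma Ti_meas[measurable]: "the_inv_into (space M) T \<in> measurable M M" using comm by (simp add: comm_system_def inv_mpt_def)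
lemma ST: "x \<in> space M \<Longrightarrow> S (T x) = T (S x)" using comm by (simp add: comm_system_def)
lemma Ssp: "S \<in> space M \<rightarrow> space M" using S_meas by (simp add: measurable_def)
lemma Tsp: "T \<in> space M \<rightarrow> space M" using T_meas by (simp add: measurable_def)

abbreviation "Ti \<equiv> the_inv_into (space M) T"

lemma Ti_T: "x \<in> space M \<Longrightarrow> Ti (T x) = x"
  using T_bij by (simp add: bij_betw_def the_inv_into_f_f)
lemma T_Ti: "y \<in> space M \<Longrightarrow> T (Ti y) = y"
  using T_bij by (simp add: bij_betw_def f_the_inv_into_f)
lemma Ti_sp: "y \<in> space M \<Longrightarrow> Ti y \<in> space M"
  using T_bij by (metis bij_betw_def the_inv_into_into order_refl)

lemma STi: "y \<in> space M \<Longrightarrow> Ti (S y) = S (Ti y)"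
proof -
  assume y: "y \<in> space M"
  have "T (S (Ti y)) = S y" using ST[OF Ti_sp[OF y]] T_Ti[OF y] by simp
  then have "Ti (S y) = Ti (T (S (Ti y)))" by simp
  also have "\<dots> = S (Ti y)" using Ti_T Ssp Ti_sp[OF y] by auto
  finally show ?thesis .
qed

sublocale M: prob_space M by (rule probM)

abbreviation "J \<equiv> Inv M S"
abbreviation "E \<equiv> real_cond_exp M J"

sublocale J: sigma_finite_subalgebra M J
  by (rule fin_subalg_Inv) (simp add: M.finite_measure_axioms)

lemma T_J[measurable]: "T \<in> measurable J J"
  by (rule commute_Inv_measurable[OF T_meas Ssp]) (simp add: ST)
lemma Ti_J[measurable]: "Ti \<in> measurable J J"
  by (rule commute_Inv_measurable[OF Ti_meas Ssp]) (simp add: STi)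

lemma integral_T: "(g::'a\<Rightarrow>real) \<in> borel_measurable M \<Longrightarrow> (\<integral>x. g (T x) \<partial>M) = (\<integral>x. g x \<partial>M)"
  using integral_distr[OF T_meas, of g] T_distr by simp

lemma integrable_T: "(g::'a\<Rightarrow>real) \<in> borel_measurable M \<Longrightarrow> integrable M (\<lambda>x. g (T x)) \<longleftrightarrow> integrable M g"
  using integrable_distr_eq[OF T_meas, of g] T_distr by simp

lemma cond_exp_T:
  assumes f: "integrable M f"
  shows "AE x in M. E (\<lambda>x. f (T x)) x = E f (T x)"
proof (rule J.real_cond_exp_charact)
  have fm[measurable]: "f \<in> borel_measurable M" using f by auto
  show "integrable M (\<lambda>x. f (T x))" using integrable_T[OF fm] f by simp
  have Ef: "integrable M (E f)" using J.real_cond_exp_int(1)[OF f] .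
  show "integrable M (\<lambda>x. E f (T x))" using integrable_T[of "E f"] Ef by simp
  show "(\<lambda>x. E f (T x)) \<in> borel_measurable J" by measurable
  fix A assume A: "A \<in> sets J"
  define A' where "A' = Ti -` A \<inter> space M"
  have A'J: "A' \<in> sets J" unfolding A'_def using measurable_sets[OF Ti_J A] by (simp add: space_Inv)
  have sJ: "sets J \<subseteq> sets M" using subalg_Inv[of M S] unfolding subalgebra_def by blast
  have A'M[measurable]: "A' \<in> sets M" using A'J sJ by auto
  have ind: "indicator A x = indicator A' (T x)" if "x \<in> space M" for x :: 'a
    using that Ti_T Tsp unfolding A'_def by (auto simp: indicator_def Pi_iff)
  have "(\<integral>x\<in>A. f (T x) \<partial>M) = (\<integral>x. indicator A' (T x) * f (T x) \<partial>M)"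
    unfolding set_lebesgue_integral_def by (rule Bochner_Integration.integral_cong) (auto simp: ind)
  also have "\<dots> = (\<integral>x. indicator A' x * f x \<partial>M)"
    by (rule integral_T) measurable
  also have "\<dots> = (\<integral>x\<in>A'. f x \<partial>M)" unfolding set_lebesgue_integral_def by simp
  also have "\<dots> = (\<integral>x\<in>A'. E f x \<partial>M)" by (rule J.real_cond_exp_intA[OF f A'J])
  also have "\<dots> = (\<integral>x. indicator A' x * E f x \<partial>M)" unfolding set_lebesgue_integral_def by simp
  also have "\<dots> = (\<integral>x. indicator A' (T x) * E f (T x) \<partial>M)"
    by (rule integral_T[symmetric]) measurable
  also have "\<dots> = (\<integral>x\<in>A. E f (T x) \<partial>M)"
    unfolding set_lebesgue_integral_def by (rule Bochner_Integration.integral_cong) (auto simp: ind)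
  finally show "(\<integral>x\<in>A. f (T x) \<partial>M) = (\<integral>x\<in>A. E f (T x) \<partial>M)" .
qed

end


context sys begin

lemma muS_prob: "prob_space \<mu>S" using muS by (simp add: is_muS_def)
lemma sets_muS[measurable_cong]: "sets \<mu>S = sets (M \<Otimes>\<^sub>M M)" using muS by (simp add: is_muS_def)
lemma space_muS: "space \<mu>S = space M \<times> space M"
  using sets_eq_imp_space_eq[OF sets_muS] by (simp add: space_pair_measure)
lemma muS_int: "bdd_meas M f0 \<Longrightarrow> bdd_meas M f1 \<Longrightarrow>
   integral\<^sup>L \<mu>S (tensor f0 f1) = (\<integral>x. E f0 x * E f1 x \<partial>M)"
  using muS by (simp add: is_muS_def)

sublocale P: prob_space \<mu>S by (rule muS_prob)

abbreviation "\<tau> \<equiv> map_prod T T"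

lemma tau_meas[measurable]: "\<tau> \<in> measurable \<mu>S \<mu>S"
  unfolding measurable_cong_sets[OF sets_muS sets_muS] map_prod_def by measurable

lemma tau_sp: "\<tau> \<in> space \<mu>S \<rightarrow> space \<mu>S"
  using Tsp by (auto simp: space_muS Pi_iff)

lemma tensor_meas[measurable]:
  assumes [measurable]: "f \<in> borel_measurable M" "g \<in> borel_measurable M"
  shows "tensor f g \<in> borel_measurable \<mu>S"
  unfolding tensor_def measurable_cong_sets[OF sets_muS refl] by measurable

lemma bdd_ind: "A \<in> sets M \<Longrightarrow> bdd_meas M (indicator A)"
  unfolding bdd_meas_def by (auto intro!: exI[of _ 1] simp: indicator_def)

lemma rect: assumes "X \<in> sets M" "Y \<in> sets M"
  shows "emeasure \<mu>S (X \<times> Y) = ennreal (\<integral>x. E (indicator X) x * E (indicator Y) x \<partial>M)"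
proof -
  have XY: "X \<times> Y \<in> sets \<mu>S" using assms by (simp add: sets_muS)
  have "emeasure \<mu>S (X \<times> Y) = ennreal (measure \<mu>S (X \<times> Y))" by (simp add: P.emeasure_eq_measure)
  also have "measure \<mu>S (X \<times> Y) = integral\<^sup>L \<mu>S (indicator (X \<times> Y))"
    using XY by (simp add: Int_absorb2 sets.sets_into_space)
  also have "indicator (X \<times> Y) = tensor (indicator X) (indicator Y)"
    by (auto simp: tensor_def indicator_def fun_eq_iff)
  finally show ?thesis using muS_int bdd_ind assms by simp
qed

lemma E_ind_T: assumes "a \<in> sets M"
  shows "AE x in M. E (indicator (T -` a \<inter> space M)) x = E (indicator a) (T x)"
proof -
  have "AE x in M. E (indicator (T -` a \<inter> space M)) x = E (\<lambda>x. indicator a (T x)) x"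
    by (rule J.real_cond_exp_cong) (use assms in \<open>auto simp: indicator_def\<close>)
  moreover have "AE x in M. E (\<lambda>x. indicator a (T x)) x = E (indicator a) (T x)"
    by (rule cond_exp_T) (use assms in \<open>auto intro!: integrable_real_indicator simp: less_top[symmetric]\<close>)
  ultimately show ?thesis by auto
qed

lemma tau_distr: "distr \<mu>S \<mu>S \<tau> = \<mu>S"
proof (rule measure_eqI_generator_eq[OF Int_stable_pair_measure_generator[of M M] pair_measure_closed,
      where A="\<lambda>_. space M \<times> space M"])
  show "sets (distr \<mu>S \<mu>S \<tau>) = sigma_sets (space M \<times> space M) {a \<times> b |a b. a \<in> sets M \<and> b \<in> sets M}"
    by (simp add: sets_muS sets_pair_measure)
  show "sets \<mu>S = sigma_sets (space M \<times> space M) {a \<times> b |a b. a \<in> sets M \<and> b \<in> sets M}"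
    by (simp add: sets_muS sets_pair_measure)
  show "range (\<lambda>_. space M \<times> space M) \<subseteq> {a \<times> b |a b. a \<in> sets M \<and> b \<in> sets M}" by auto
  show "(\<Union>i. space M \<times> space M) = space M \<times> space M" by simp
  fix X assume "X \<in> {a \<times> b |a b. a \<in> sets M \<and> b \<in> sets M}"
  then obtain a b where X: "X = a \<times> b" and ab[measurable]: "a \<in> sets M" "b \<in> sets M" by auto
  have XS: "X \<in> sets \<mu>S" using X ab by (simp add: sets_muS)
  have pre: "\<tau> -` X \<inter> space \<mu>S = (T -` a \<inter> space M) \<times> (T -` b \<inter> space M)"
    by (auto simp: X space_muS)
  have "emeasure (distr \<mu>S \<mu>S \<tau>) X = emeasure \<mu>S ((T -` a \<inter> space M) \<times> (T -` b \<inter> space M))"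
    using emeasure_distr[OF tau_meas XS] pre by simp
  also have "\<dots> = ennreal (\<integral>x. E (indicator (T -` a \<inter> space M)) x * E (indicator (T -` b \<inter> space M)) x \<partial>M)"
    by (rule rect) measurable
  also have "(\<integral>x. E (indicator (T -` a \<inter> space M)) x * E (indicator (T -` b \<inter> space M)) x \<partial>M)
      = (\<integral>x. E (indicator a) (T x) * E (indicator b) (T x) \<partial>M)"
    by (rule integral_cong_AE) (use E_ind_T[OF ab(1)] E_ind_T[OF ab(2)] in auto)
  also have "\<dots> = (\<integral>x. E (indicator a) x * E (indicator b) x \<partial>M)"
    by (rule integral_T[where g="\<lambda>x. E (indicator a) x * E (indicator b) x"]) measurable
  also have "ennreal \<dots> = emeasure \<mu>S X" using rect[OF ab] X by simp
  finally show "emeasure (distr \<mu>S \<mu>S \<tau>) X = emeasure \<mu>S X" by simp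
qed (simp add: emeasure_distr[OF tau_meas] P.emeasure_eq_measure)

lemma integral_tau: "(g::_\<Rightarrow>real) \<in> borel_measurable \<mu>S \<Longrightarrow> (\<integral>z. g (\<tau> z) \<partial>\<mu>S) = (\<integral>z. g z \<partial>\<mu>S)"
  using integral_distr[OF tau_meas, of g] tau_distr by simp

lemma integrable_tau: "(g::_\<Rightarrow>real) \<in> borel_measurable \<mu>S \<Longrightarrow> integrable \<mu>S (\<lambda>z. g (\<tau> z)) \<longleftrightarrow> integrable \<mu>S g"
  using integrable_distr_eq[OF tau_meas, of g] tau_distr by simp

lemma AE_tau: assumes "AE z in \<mu>S. Q z" shows "AE z in \<mu>S. Q (\<tau> z)"
proof -
  have "AE z in distr \<mu>S \<mu>S \<tau>. Q z" unfolding tau_distr by (rule assms)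
  then show ?thesis by (rule AE_distrD[OF tau_meas])
qed

end


lemma measurable_funpow: "f \<in> measurable N N \<Longrightarrow> (f ^^ n) \<in> measurable N N"
  by (induction n) (auto intro: measurable_comp)

lemma funpow_map_prod_pt: "(map_prod (f::'b\<Rightarrow>'b) f ^^ n) (x, y) = ((f ^^ n) x, (f ^^ n) y)"
  by (induction n) auto

lemma funpow_map_prod: "(map_prod (f::'b\<Rightarrow>'b) f ^^ n) = map_prod (f ^^ n) (f ^^ n)"
  by (rule ext) (auto simp: funpow_map_prod_pt)

lemma AE_prod_bound:
  fixes f g :: "_ \<Rightarrow> real"
  assumes "AE z in N. \<bar>f z\<bar> \<le> A" "AE z in N. \<bar>g z\<bar> \<le> B"
  shows "AE z in N. \<bar>f z * g z\<bar> \<le> A * B"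
  using assms
proof eventually_elim
  case (elim z)
  have "\<bar>f z\<bar> * \<bar>g z\<bar> \<le> A * B"
    by (rule mult_mono) (use elim in \<open>auto intro: order_trans[OF abs_ge_zero]\<close>)
  then show ?case by (simp add: abs_mult)
qed

lemma funpow_in: "f \<in> A \<rightarrow> A \<Longrightarrow> x \<in> A \<Longrightarrow> (f ^^ n) x \<in> A"
  by (induction n) auto

definition cc :: "('b \<Rightarrow> 'b) \<Rightarrow> (nat \<Rightarrow> real) \<Rightarrow> nat \<Rightarrow> ('b \<Rightarrow> real) \<Rightarrow> 'b \<Rightarrow> real" where
  "cc f c K W z = (\<Sum>k<K. c k * W ((f ^^ k) z))"

definition cvx :: "(nat \<Rightarrow> real) \<Rightarrow> nat \<Rightarrow> bool" where
  "cvx c K \<longleftrightarrow> (\<forall>k<K. 0 \<le> c k) \<and> (\<Sum>k<K. c k) = 1"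

context sys begin

abbreviation "I \<equiv> Inv \<mu>S \<tau>"
abbreviation "PE \<equiv> real_cond_exp \<mu>S I"

sublocale I: sigma_finite_subalgebra \<mu>S I
  by (rule fin_subalg_Inv) (simp add: P.finite_measure_axioms)

lemma I_inv: "(\<phi>::_\<Rightarrow>real) \<in> borel_measurable I \<Longrightarrow> z \<in> space \<mu>S \<Longrightarrow> \<phi> (\<tau> z) = \<phi> z"
  by (rule Inv_measurable_invariant[OF tau_sp])

lemma I_inv_n: "(\<phi>::_\<Rightarrow>real) \<in> borel_measurable I \<Longrightarrow> z \<in> space \<mu>S \<Longrightarrow> \<phi> ((\<tau> ^^ n) z) = \<phi> z"
proof (induction n)
  case (Suc n)
  have "(\<tau> ^^ n) z \<in> space \<mu>S" using funpow_in[OF tau_sp Suc.prems(2)] .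
  then show ?case using Suc I_inv[OF Suc.prems(1)] by simp
qed simp

lemma taun_meas[measurable]: "(\<tau> ^^ n) \<in> measurable \<mu>S \<mu>S"
  by (rule measurable_funpow[OF tau_meas])

lemma Tn_meas[measurable]: "(T ^^ n) \<in> measurable M M"
  by (rule measurable_funpow[OF T_meas])

lemma integral_taun: "(g::_\<Rightarrow>real) \<in> borel_measurable \<mu>S \<Longrightarrow> (\<integral>z. g ((\<tau>^^n) z) \<partial>\<mu>S) = (\<integral>z. g z \<partial>\<mu>S)"
proof (induction n)
  case (Suc n)
  have "(\<integral>z. g ((\<tau>^^Suc n) z) \<partial>\<mu>S) = (\<integral>z. (\<lambda>z. g ((\<tau>^^n) z)) (\<tau> z) \<partial>\<mu>S)"
    by (simp add: funpow_swap1)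
  also have "\<dots> = (\<integral>z. g ((\<tau>^^n) z) \<partial>\<mu>S)" by (rule integral_tau) (use Suc in measurable)
  finally show ?case using Suc by simp
qed simp

lemma AE_taun: "AE z in \<mu>S. Q z \<Longrightarrow> AE z in \<mu>S. Q ((\<tau>^^n) z)"
proof (induction n)
  case (Suc n)
  have "AE z in \<mu>S. Q ((\<tau>^^n) (\<tau> z))" by (rule AE_tau[OF Suc.IH[OF Suc.prems]])
  then show ?case by (simp add: funpow_swap1)
qed simp

lemma bounded_meas_integrable:
  "(g::_\<Rightarrow>real) \<in> borel_measurable \<mu>S \<Longrightarrow> AE z in \<mu>S. \<bar>g z\<bar> \<le> B \<Longrightarrow> integrable \<mu>S g"
  by (rule integrable_AE_bounded[OF P.finite_measure_axioms])

lemma PE_bound: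
  assumes [measurable]: "F \<in> borel_measurable \<mu>S" and B: "\<And>z. z \<in> space \<mu>S \<Longrightarrow> \<bar>F z\<bar> \<le> B"
  shows "AE z in \<mu>S. \<bar>PE F z\<bar> \<le> B"
proof -
  have iF: "integrable \<mu>S F" by (rule bounded_meas_integrable) (use B in \<open>auto intro!: AE_I2\<close>)
  have "AE z in \<mu>S. PE F z \<le> B" by (rule I.real_cond_exp_le_c[OF iF]) (use B in \<open>force intro!: AE_I2 simp: abs_le_iff\<close>)
  moreover have "AE z in \<mu>S. PE F z \<ge> -B" by (rule I.real_cond_exp_ge_c[OF iF]) (use B in \<open>force intro!: AE_I2 simp: abs_le_iff\<close>)
  ultimately show ?thesis by auto
qed

lemma cc_meas[measurable]: assumes [measurable]: "W \<in> borel_measurable \<mu>S" shows "cc \<tau> c K W \<in> borel_measurable \<mu>S"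
  unfolding cc_def by measurable

lemma cc_bound: assumes "\<And>z. z \<in> space \<mu>S \<Longrightarrow> \<bar>W z\<bar> \<le> B" "cvx c K" "z \<in> space \<mu>S"
  shows "\<bar>cc \<tau> c K W z\<bar> \<le> B"
proof -
  have "\<bar>cc \<tau> c K W z\<bar> \<le> (\<Sum>k<K. \<bar>c k * W ((\<tau> ^^ k) z)\<bar>)" unfolding cc_def by (rule sum_abs)
  also have "\<dots> \<le> (\<Sum>k<K. c k * B)"
  proof (rule sum_mono)
    fix k assume "k \<in> {..<K}"
    then have "0 \<le> c k" using assms(2) by (simp add: cvx_def)
    moreover have "\<bar>W ((\<tau> ^^ k) z)\<bar> \<le> B" using assms(1) funpow_in[OF tau_sp assms(3)] by blast
    ultimately show "\<bar>c k * W ((\<tau> ^^ k) z)\<bar> \<le> c k * B" by (simp add: abs_mult mult_left_mono)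
  qed
  also have "\<dots> = B" using assms(2) by (simp add: cvx_def sum_distrib_right[symmetric])
  finally show ?thesis .
qed

lemma F1:
  assumes Fm[measurable]: "F \<in> borel_measurable \<mu>S" and B: "\<And>z. z \<in> space \<mu>S \<Longrightarrow> \<bar>F z\<bar> \<le> B"
    and c: "cvx c K"
  shows "(\<integral>z. (PE F z)^2 \<partial>\<mu>S) \<le> (\<integral>z. (cc \<tau> c K F z)^2 \<partial>\<mu>S)"
proof -
  have PB: "AE z in \<mu>S. \<bar>PE F z\<bar> \<le> B" by (rule PE_bound[OF Fm B])
  have B0: "0 \<le> B" using B[of "SOME z. z \<in> space \<mu>S"] P.not_empty some_in_eq by fastforce
  have FB: "AE z in \<mu>S. \<bar>F z\<bar> \<le> B" using B by (auto intro!: AE_I2)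
  have i1: "integrable \<mu>S (\<lambda>z. PE F z * F z)"
    by (rule bounded_meas_integrable[OF _ AE_prod_bound[OF PB FB]]) measurable
  have i2: "integrable \<mu>S (\<lambda>z. (PE F z)^2)"
    using bounded_meas_integrable[OF _ AE_prod_bound[OF PB PB]] by (simp add: power2_eq_square)
  have Fc: "\<And>z. z \<in> space \<mu>S \<Longrightarrow> \<bar>cc \<tau> c K F z\<bar> \<le> B" using cc_bound[OF B c] .
  have FcB: "AE z in \<mu>S. \<bar>cc \<tau> c K F z\<bar> \<le> B" using Fc by (auto intro!: AE_I2)
  have i3: "integrable \<mu>S (\<lambda>z. (cc \<tau> c K F z)^2)"
    using bounded_meas_integrable[OF _ AE_prod_bound[OF FcB FcB]] by (simp add: power2_eq_square)
  have i4: "integrable \<mu>S (\<lambda>z. PE F z * cc \<tau> c K F z)"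
    by (rule bounded_meas_integrable[OF _ AE_prod_bound[OF PB FcB]]) measurable
  have eq1: "(\<integral>z. PE F z * F z \<partial>\<mu>S) = (\<integral>z. (PE F z)^2 \<partial>\<mu>S)"
    using I.real_cond_exp_intg(2)[of "PE F" F, OF i1] by (simp add: power2_eq_square)
  have ik: "integrable \<mu>S (\<lambda>z. PE F z * F ((\<tau>^^k) z))" for k
  proof -
    have "AE z in \<mu>S. \<bar>F ((\<tau>^^k) z)\<bar> \<le> B" using B funpow_in[OF tau_sp] by (auto intro!: AE_I2)
    from AE_prod_bound[OF PB this] show ?thesis by (rule bounded_meas_integrable[rotated]) measurable
  qed
  have eqk: "(\<integral>z. PE F z * F ((\<tau>^^k) z) \<partial>\<mu>S) = (\<integral>z. PE F z * F z \<partial>\<mu>S)" for k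
  proof -
    have "(\<integral>z. PE F z * F ((\<tau>^^k) z) \<partial>\<mu>S) = (\<integral>z. (\<lambda>z. PE F z * F z) ((\<tau>^^k) z) \<partial>\<mu>S)"
      by (rule Bochner_Integration.integral_cong) (auto simp: I_inv_n)
    also have "\<dots> = (\<integral>z. PE F z * F z \<partial>\<mu>S)" by (rule integral_taun) measurable
    finally show ?thesis .
  qed
  have eq2: "(\<integral>z. PE F z * cc \<tau> c K F z \<partial>\<mu>S) = (\<integral>z. (PE F z)^2 \<partial>\<mu>S)"
  proof -
    have "(\<integral>z. PE F z * cc \<tau> c K F z \<partial>\<mu>S) = (\<integral>z. (\<Sum>k<K. c k * (PE F z * F ((\<tau>^^k) z))) \<partial>\<mu>S)"
      unfolding cc_def by (simp add: sum_distrib_left algebra_simps)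
    also have "\<dots> = (\<Sum>k<K. c k * (\<integral>z. PE F z * F ((\<tau>^^k) z) \<partial>\<mu>S))"
      using ik by (simp add: Bochner_Integration.integral_sum)
    also have "\<dots> = (\<Sum>k<K. c k * (\<integral>z. (PE F z)^2 \<partial>\<mu>S))" by (simp add: eqk eq1)
    also have "\<dots> = (\<integral>z. (PE F z)^2 \<partial>\<mu>S)" using c by (simp add: cvx_def sum_distrib_right[symmetric])
    finally show ?thesis .
  qed
  have cs: "(\<integral>z. PE F z * cc \<tau> c K F z \<partial>\<mu>S)^2 \<le> (\<integral>z. (PE F z)^2 \<partial>\<mu>S) * (\<integral>z. (cc \<tau> c K F z)^2 \<partial>\<mu>S)"
    by (rule integral_cauchy_schwarz[OF i2 i3 i4])
  let ?a = "\<integral>z. (PE F z)^2 \<partial>\<mu>S" and ?b = "\<integral>z. (cc \<tau> c K F z)^2 \<partial>\<mu>S"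
  have "?a^2 \<le> ?a * ?b" using cs eq2 by simp
  moreover have "0 \<le> ?a" "0 \<le> ?b" by auto
  ultimately show ?thesis
  proof (cases "?a = 0")
    case False
    with \<open>0 \<le> ?a\<close> have "0 < ?a" by linarith
    with \<open>?a^2 \<le> ?a * ?b\<close> show ?thesis by (simp add: power2_eq_square)
  qed simp
qed

end


lemma cexp_bound:
  assumes "finite_measure N" "sigma_finite_subalgebra N G" and [measurable]: "f \<in> borel_measurable N"
    and B: "\<And>z. z \<in> space N \<Longrightarrow> \<bar>f z\<bar> \<le> B"
  shows "AE z in N. \<bar>real_cond_exp N G f z\<bar> \<le> B"
proof -
  interpret sigma_finite_subalgebra N G by fact
  have iF: "integrable N f" by (rule integrable_AE_bounded[OF assms(1,3)]) (use B in \<open>auto intro!: AE_I2\<close>)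
  have "AE z in N. real_cond_exp N G f z \<le> B" by (rule real_cond_exp_le_c[OF iF]) (use B in \<open>force intro!: AE_I2 simp: abs_le_iff\<close>)
  moreover have "AE z in N. real_cond_exp N G f z \<ge> -B" by (rule real_cond_exp_ge_c[OF iF]) (use B in \<open>force intro!: AE_I2 simp: abs_le_iff\<close>)
  ultimately show ?thesis by auto
qed

lemma weighted_cs:
  fixes w a b :: "'i \<Rightarrow> real"
  assumes "\<And>i. i \<in> A \<Longrightarrow> 0 \<le> w i"
  shows "(\<Sum>i\<in>A. w i * (a i * b i)) \<le> sqrt (\<Sum>i\<in>A. w i * (a i)^2) * sqrt (\<Sum>i\<in>A. w i * (b i)^2)"
proof -
  have "(\<Sum>i\<in>A. (sqrt (w i) * a i) * (sqrt (w i) * b i))^2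
     \<le> (\<Sum>i\<in>A. (sqrt (w i) * a i)^2) * (\<Sum>i\<in>A. (sqrt (w i) * b i)^2)"
    by (rule Cauchy_Schwarz_ineq_sum)
  also have "(\<Sum>i\<in>A. (sqrt (w i) * a i) * (sqrt (w i) * b i)) = (\<Sum>i\<in>A. w i * (a i * b i))"
    by (rule sum.cong) (use assms in \<open>auto simp: algebra_simps\<close>)
  also have "(\<Sum>i\<in>A. (sqrt (w i) * a i)^2) = (\<Sum>i\<in>A. w i * (a i)^2)"
    by (rule sum.cong) (use assms in \<open>auto simp: power_mult_distrib\<close>)
  also have "(\<Sum>i\<in>A. (sqrt (w i) * b i)^2) = (\<Sum>i\<in>A. w i * (b i)^2)"
    by (rule sum.cong) (use assms in \<open>auto simp: power_mult_distrib\<close>)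
  finally have *: "(\<Sum>i\<in>A. w i * (a i * b i))^2 \<le> (\<Sum>i\<in>A. w i * (a i)^2) * (\<Sum>i\<in>A. w i * (b i)^2)" .
  have "(\<Sum>i\<in>A. w i * (a i * b i)) \<le> sqrt ((\<Sum>i\<in>A. w i * (a i * b i))^2)" by simp
  also have "\<dots> \<le> sqrt ((\<Sum>i\<in>A. w i * (a i)^2) * (\<Sum>i\<in>A. w i * (b i)^2))" using * real_sqrt_le_mono by blast
  finally show ?thesis by (simp add: real_sqrt_mult)
qed

context sys begin

definition pk :: "nat \<Rightarrow> nat \<Rightarrow> ('a \<Rightarrow> real) \<Rightarrow> 'a \<Rightarrow> real" where
  "pk k l u = (\<lambda>x. u ((T ^^ k) x) * u ((T ^^ l) x))"

lemma bdd_pk: assumes "bdd_meas M u" shows "bdd_meas M (pk k l u)"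
proof -
  obtain B where [measurable]: "u \<in> borel_measurable M" and B: "\<And>x. x \<in> space M \<Longrightarrow> \<bar>u x\<bar> \<le> B"
    using assms by (auto simp: bdd_meas_def)
  have "\<bar>pk k l u x\<bar> \<le> B * B" if "x \<in> space M" for x
    unfolding pk_def abs_mult
    by (rule mult_mono) (use B funpow_in[OF Tsp that] in \<open>auto intro: order_trans[OF abs_ge_zero]\<close>)
  moreover have "pk k l u \<in> borel_measurable M" unfolding pk_def by measurable
  ultimately show ?thesis by (auto simp: bdd_meas_def)
qed

lemma bdd_meas_bound: "bdd_meas M u \<Longrightarrow> \<exists>B\<ge>0. \<forall>x\<in>space M. \<bar>u x\<bar> \<le> B"
  unfolding bdd_meas_def by (meson abs_ge_zero order_trans nle_le)

lemma tau_pow: "(\<tau> ^^ k) z = ((T ^^ k) (fst z), (T ^^ k) (snd z))"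
  by (cases z) (simp add: funpow_map_prod)

lemma cc_sq: "(cc \<tau> c K (tensor u v) z)^2 =
   (\<Sum>k<K. \<Sum>l<K. c k * c l * tensor (pk k l u) (pk k l v) z)"
  unfolding cc_def power2_eq_square sum_product
  by (intro sum.cong refl) (simp add: tensor_def pk_def tau_pow)

lemma tensor_bdd_int:
  assumes "bdd_meas M u" "bdd_meas M v" shows "integrable \<mu>S (tensor u v)"
proof -
  obtain A B where [measurable]: "u \<in> borel_measurable M" "v \<in> borel_measurable M"
    and A: "\<And>x. x \<in> space M \<Longrightarrow> \<bar>u x\<bar> \<le> A" and B: "\<And>x. x \<in> space M \<Longrightarrow> \<bar>v x\<bar> \<le> B"
    using assms by (auto simp: bdd_meas_def)
  have "AE z in \<mu>S. \<bar>u (fst z)\<bar> \<le> A" using A by (auto intro!: AE_I2 simp: space_muS)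
  moreover have "AE z in \<mu>S. \<bar>v (snd z)\<bar> \<le> B" using B by (auto intro!: AE_I2 simp: space_muS)
  ultimately have "AE z in \<mu>S. \<bar>tensor u v z\<bar> \<le> A * B" unfolding tensor_def by (rule AE_prod_bound)
  then show ?thesis by (rule bounded_meas_integrable[rotated]) measurable
qed

lemma cc_sq_int:
  assumes "bdd_meas M u" "bdd_meas M v"
  shows "(\<integral>z. (cc \<tau> c K (tensor u v) z)^2 \<partial>\<mu>S) =
     (\<Sum>k<K. \<Sum>l<K. c k * c l * (\<integral>x. E (pk k l u) x * E (pk k l v) x \<partial>M))"
proof -
  have "(\<integral>z. (cc \<tau> c K (tensor u v) z)^2 \<partial>\<mu>S)
      = (\<integral>z. (\<Sum>k<K. \<Sum>l<K. c k * c l * tensor (pk k l u) (pk k l v) z) \<partial>\<mu>S)"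
    by (simp add: cc_sq)
  also have "\<dots> = (\<Sum>k<K. \<Sum>l<K. c k * c l * (\<integral>z. tensor (pk k l u) (pk k l v) z \<partial>\<mu>S))"
    using tensor_bdd_int[OF bdd_pk[OF assms(1)] bdd_pk[OF assms(2)]]
    by (simp add: Bochner_Integration.integral_sum)
  also have "\<dots> = (\<Sum>k<K. \<Sum>l<K. c k * c l * (\<integral>x. E (pk k l u) x * E (pk k l v) x \<partial>M))"
    using muS_int[OF bdd_pk[OF assms(1)] bdd_pk[OF assms(2)]] by simp
  finally show ?thesis .
qed

lemma E_sq_int: assumes "bdd_meas M u" "bdd_meas M v"
  shows "integrable M (\<lambda>x. E u x * E v x)"
proof -
  obtain A B where [measurable]: "u \<in> borel_measurable M" "v \<in> borel_measurable M"
    and A: "\<And>x. x \<in> space M \<Longrightarrow> \<bar>u x\<bar> \<le> A" and B: "\<And>x. x \<in> space M \<Longrightarrow> \<bar>v x\<bar> \<le> B"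
    using assms by (auto simp: bdd_meas_def)
  have "AE x in M. \<bar>E u x * E v x\<bar> \<le> A * B"
    by (rule AE_prod_bound[OF cexp_bound[OF M.finite_measure_axioms J.sigma_finite_subalgebra_axioms _ A]
          cexp_bound[OF M.finite_measure_axioms J.sigma_finite_subalgebra_axioms _ B]]) measurable
  then show ?thesis by (rule integrable_AE_bounded[OF M.finite_measure_axioms, rotated]) measurable
qed

lemma F2:
  assumes u: "bdd_meas M u" and v: "bdd_meas M v" and c: "cvx c K"
  shows "(\<integral>z. (cc \<tau> c K (tensor u v) z)^2 \<partial>\<mu>S)
    \<le> sqrt (\<integral>z. (cc \<tau> c K (tensor u u) z)^2 \<partial>\<mu>S) * sqrt (\<integral>z. (cc \<tau> c K (tensor v v) z)^2 \<partial>\<mu>S)"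
proof -
  define w where "w = (\<lambda>(k,l). c k * c l)"
  define a where "a = (\<lambda>(k,l). sqrt (\<integral>x. (E (pk k l u) x)^2 \<partial>M))"
  define b where "b = (\<lambda>(k,l). sqrt (\<integral>x. (E (pk k l v) x)^2 \<partial>M))"
  let ?A = "{..<K} \<times> {..<K}"
  have w0: "\<And>i. i \<in> ?A \<Longrightarrow> 0 \<le> w i" using c by (auto simp: w_def cvx_def)
  have ab: "(\<integral>x. E (pk k l u) x * E (pk k l v) x \<partial>M) \<le> a (k,l) * b (k,l)" for k l
  proof -
    have "(\<integral>x. E (pk k l u) x * E (pk k l v) x \<partial>M)^2 \<le> (\<integral>x. (E (pk k l u) x)^2 \<partial>M) * (\<integral>x. (E (pk k l v) x)^2 \<partial>M)"
      by (rule integral_cauchy_schwarz)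
         (use E_sq_int[OF bdd_pk[OF u] bdd_pk[OF u]] E_sq_int[OF bdd_pk[OF v] bdd_pk[OF v]]
              E_sq_int[OF bdd_pk[OF u] bdd_pk[OF v]] in \<open>simp_all add: power2_eq_square\<close>)
    from real_sqrt_le_mono[OF this]
    have "\<bar>\<integral>x. E (pk k l u) x * E (pk k l v) x \<partial>M\<bar> \<le> a (k,l) * b (k,l)"
      unfolding a_def b_def by (simp add: real_sqrt_mult)
    then show ?thesis by (rule order_trans[OF abs_ge_self])
  qed
  have sq_a: "(\<integral>z. (cc \<tau> c K (tensor u u) z)^2 \<partial>\<mu>S) = (\<Sum>i\<in>?A. w i * (a i)^2)"
    unfolding cc_sq_int[OF u u] sum.cartesian_product
    by (intro sum.cong refl) (auto simp: w_def a_def power2_eq_square)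
  have sq_b: "(\<integral>z. (cc \<tau> c K (tensor v v) z)^2 \<partial>\<mu>S) = (\<Sum>i\<in>?A. w i * (b i)^2)"
    unfolding cc_sq_int[OF v v] sum.cartesian_product
    by (intro sum.cong refl) (auto simp: w_def b_def power2_eq_square)
  have "(\<integral>z. (cc \<tau> c K (tensor u v) z)^2 \<partial>\<mu>S) = (\<Sum>(k,l)\<in>?A. c k * c l * (\<integral>x. E (pk k l u) x * E (pk k l v) x \<partial>M))"
    unfolding cc_sq_int[OF u v] sum.cartesian_product ..
  also have "\<dots> \<le> (\<Sum>i\<in>?A. w i * (a i * b i))"
    by (rule sum_mono) (use ab w0 in \<open>auto simp: w_def intro!: mult_left_mono\<close>)
  also have "\<dots> \<le> sqrt (\<Sum>i\<in>?A. w i * (a i)^2) * sqrt (\<Sum>i\<in>?A. w i * (b i)^2)"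
    by (rule weighted_cs[OF w0])
  finally show ?thesis unfolding sq_a sq_b .
qed

end


lemma sum_if_less: "(K::nat) \<le> N \<Longrightarrow> (\<Sum>k<N. (if k < K then f k else 0)) = (\<Sum>k<K. f k :: real)"
proof -
  assume "K \<le> N"
  have "{k \<in> {..<N}. k < K} = {..<K}" using \<open>K \<le> N\<close> by (auto intro: less_le_trans)
  then show ?thesis using sum.inter_filter[of "{..<N}" f "\<lambda>k. k < K"] by simp
qed

lemma cvx_mid:
  assumes "cvx c K" "cvx c' K'"
  defines "c'' \<equiv> (\<lambda>k. ((if k < K then c k else 0) + (if k < K' then c' k else 0)) / 2)"
  shows "cvx c'' (max K K')"
    "cc f c'' (max K K') W z = (cc f c K W z + cc f c' K' W z) / 2"
proof -
  have s1: "(\<Sum>k<max K K'. (if k < K then g k else 0)) = (\<Sum>k<K. g k)" for g :: "nat \<Rightarrow> real"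
    by (rule sum_if_less) simp
  have s2: "(\<Sum>k<max K K'. (if k < K' then g k else 0)) = (\<Sum>k<K'. g k)" for g :: "nat \<Rightarrow> real"
    by (rule sum_if_less) simp
  show "cvx c'' (max K K')"
  proof -
    have "(\<Sum>k<max K K'. c'' k) = ((\<Sum>k<max K K'. (if k < K then c k else 0)) + (\<Sum>k<max K K'. (if k < K' then c' k else 0))) / 2"
      unfolding c''_def by (simp add: sum_divide_distrib[symmetric] sum.distrib)
    also have "\<dots> = 1" using assms(1,2) by (simp add: s1 s2 cvx_def)
    finally show ?thesis using assms(1,2) by (auto simp: cvx_def c''_def)
  qed
  have "cc f c'' (max K K') W z = (\<Sum>k<max K K'. ((if k < K then c k * W ((f ^^ k) z) else 0)
        + (if k < K' then c' k * W ((f ^^ k) z) else 0)) / 2)"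
    unfolding cc_def c''_def by (intro sum.cong) (auto simp: field_simps)
  also have "\<dots> = ((\<Sum>k<max K K'. (if k < K then c k * W ((f ^^ k) z) else 0))
        + (\<Sum>k<max K K'. (if k < K' then c' k * W ((f ^^ k) z) else 0))) / 2"
    by (simp add: sum_divide_distrib[symmetric] sum.distrib)
  also have "\<dots> = (cc f c K W z + cc f c' K' W z) / 2" by (simp add: s1 s2 cc_def)
  finally show "cc f c'' (max K K') W z = (cc f c K W z + cc f c' K' W z) / 2" .
qed

lemma cvx_shift:
  assumes "cvx c K"
  shows "cvx (\<lambda>k. if k = 0 then 0 else c (k - 1)) (Suc K)"
    "cc f (\<lambda>k. if k = 0 then 0 else c (k - 1)) (Suc K) W z = cc f c K W (f z)"
proof -
  show "cvx (\<lambda>k. if k = 0 then 0 else c (k - 1)) (Suc K)"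
    using assms unfolding cvx_def sum.lessThan_Suc_shift by (auto simp: less_Suc_eq_0_disj)
  show "cc f (\<lambda>k. if k = 0 then 0 else c (k - 1)) (Suc K) W z = cc f c K W (f z)"
    unfolding cc_def sum.lessThan_Suc_shift by (simp add: funpow_swap1)
qed

lemma cvx_one: "cvx (\<lambda>_. 1) 1" by (simp add: cvx_def)
lemma cc_one: "cc f (\<lambda>_. 1) 1 W z = W z" by (simp add: cc_def)


lemma conv_of_summable_diff:
  fixes x :: "nat \<Rightarrow> real"
  assumes "summable (\<lambda>j. \<bar>x (Suc j) - x j\<bar>)"
  shows "convergent x"
proof -
  have "summable (\<lambda>j. x (Suc j) - x j)" by (rule summable_rabs_cancel[OF assms])
  from summable_LIMSEQ[OF this] have "(\<lambda>n. x n - x 0) \<longlonglongrightarrow> (\<Sum>j. x (Suc j) - x j)"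
    by (simp add: sum_lessThan_telescope)
  then have "(\<lambda>n. (x n - x 0) + x 0) \<longlonglongrightarrow> (\<Sum>j. x (Suc j) - x j) + x 0"
    by (intro tendsto_intros)
  then show ?thesis by (auto simp: convergent_def)
qed

lemma dc_const:
  fixes s :: "nat \<Rightarrow> 'a \<Rightarrow> real"
  assumes "finite_measure N" "f \<in> borel_measurable N" "\<And>i. s i \<in> borel_measurable N"
    "AE x in N. (\<lambda>i. s i x) \<longlonglongrightarrow> f x" "\<And>i. AE x in N. \<bar>s i x\<bar> \<le> C"
  shows "(\<lambda>i. integral\<^sup>L N (s i)) \<longlonglongrightarrow> integral\<^sup>L N f"
proof -
  interpret finite_measure N by fact
  show ?thesis
    by (rule integral_dominated_convergence[where w="\<lambda>_. C"]) (use assms in auto)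
qed

lemma lim_shift: "lim (\<lambda>n. X (Suc n)) = lim X"
  unfolding lim_def by (simp add: filterlim_sequentially_Suc)


context sys begin

context
  fixes W :: "'a \<times> 'a \<Rightarrow> real" and B :: real
  assumes Wm[measurable]: "W \<in> borel_measurable \<mu>S" and WB: "\<And>z. z \<in> space \<mu>S \<Longrightarrow> \<bar>W z\<bar> \<le> B"
begin

lemma B0: "0 \<le> B"
proof -
  obtain z where "z \<in> space \<mu>S" using P.not_empty by blast
  from WB[OF this] show ?thesis by linarith
qed

lemma ccB: "cvx c K \<Longrightarrow> z \<in> space \<mu>S \<Longrightarrow> \<bar>cc \<tau> c K W z\<bar> \<le> B"
  by (rule cc_bound[OF WB])

lemma ccAE: "cvx c K \<Longrightarrow> AE z in \<mu>S. \<bar>cc \<tau> c K W z\<bar> \<le> B"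
  using ccB by (auto intro!: AE_I2)

lemma int_prodAE:
  fixes f g :: "'a \<times> 'a \<Rightarrow> real"
  assumes [measurable]: "f \<in> borel_measurable \<mu>S" "g \<in> borel_measurable \<mu>S"
    and "AE z in \<mu>S. \<bar>f z\<bar> \<le> C1" "AE z in \<mu>S. \<bar>g z\<bar> \<le> C2"
  shows "integrable \<mu>S (\<lambda>z. f z * g z)"
  by (rule bounded_meas_integrable[OF _ AE_prod_bound[OF assms(3,4)]]) measurable

lemma int_sqAE:
  fixes f :: "'a \<times> 'a \<Rightarrow> real"
  assumes [measurable]: "f \<in> borel_measurable \<mu>S" and "AE z in \<mu>S. \<bar>f z\<bar> \<le> C1"
  shows "integrable \<mu>S (\<lambda>z. (f z)^2)"
  using int_prodAE[OF assms(1) assms(1) assms(2) assms(2)] by (simp add: power2_eq_square)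

definition "Vset = {(\<integral>z. (cc \<tau> c K W z)^2 \<partial>\<mu>S) | c K. cvx c K}"
definition "dd = Inf Vset"

lemma Vset_ne: "Vset \<noteq> {}"
  unfolding Vset_def using cvx_one by blast

lemma Vset_bdd: "bdd_below Vset"
  unfolding Vset_def by (rule bdd_belowI[of _ 0]) auto

lemma dd_le: "cvx c K \<Longrightarrow> dd \<le> (\<integral>z. (cc \<tau> c K W z)^2 \<partial>\<mu>S)"
  unfolding dd_def by (rule cInf_lower[OF _ Vset_bdd]) (auto simp: Vset_def)

lemma close:
  assumes c: "cvx c K" and c': "cvx c' K'"
  shows "(\<integral>z. (cc \<tau> c K W z - cc \<tau> c' K' W z)^2 \<partial>\<mu>S)
     \<le> 2 * ((\<integral>z. (cc \<tau> c K W z)^2 \<partial>\<mu>S) - dd) + 2 * ((\<integral>z. (cc \<tau> c' K' W z)^2 \<partial>\<mu>S) - dd)"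
proof -
  define c'' where "c'' = (\<lambda>k. ((if k < K then c k else 0) + (if k < K' then c' k else 0)) / 2)"
  have c'': "cvx c'' (max K K')" unfolding c''_def by (rule cvx_mid(1)[OF c c'])
  have mid: "cc \<tau> c'' (max K K') W z = (cc \<tau> c K W z + cc \<tau> c' K' W z) / 2" for z
    unfolding c''_def by (rule cvx_mid(2)[OF c c'])
  let ?a = "cc \<tau> c K W" and ?b = "cc \<tau> c' K' W" and ?m = "cc \<tau> c'' (max K K') W"
  have ia: "integrable \<mu>S (\<lambda>z. (?a z)^2)" by (rule int_sqAE[OF _ ccAE[OF c]]) measurable
  have ib: "integrable \<mu>S (\<lambda>z. (?b z)^2)" by (rule int_sqAE[OF _ ccAE[OF c']]) measurable
  have im: "integrable \<mu>S (\<lambda>z. (?m z)^2)" by (rule int_sqAE[OF _ ccAE[OF c'']]) measurable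
  have "(\<integral>z. (?a z - ?b z)^2 \<partial>\<mu>S) = (\<integral>z. 2 * (?a z)^2 + 2 * (?b z)^2 - 4 * (?m z)^2 \<partial>\<mu>S)"
    by (rule Bochner_Integration.integral_cong) (auto simp: mid power2_eq_square field_simps)
  also have "\<dots> = 2 * (\<integral>z. (?a z)^2 \<partial>\<mu>S) + 2 * (\<integral>z. (?b z)^2 \<partial>\<mu>S) - 4 * (\<integral>z. (?m z)^2 \<partial>\<mu>S)"
    using ia ib im by simp
  also have "\<dots> \<le> 2 * (\<integral>z. (?a z)^2 \<partial>\<mu>S) + 2 * (\<integral>z. (?b z)^2 \<partial>\<mu>S) - 4 * dd"
    using dd_le[OF c''] by simp
  finally show ?thesis by simp
qed


lemma mean_erg:
  assumes PW: "AE z in \<mu>S. PE W z = 0" and eps: "0 < \<epsilon>"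
  shows "\<exists>c K. cvx c K \<and> (\<integral>z. (cc \<tau> c K W z)^2 \<partial>\<mu>S) < \<epsilon>"
proof -
  have "\<forall>j::nat. \<exists>p. cvx (fst p) (snd p) \<and> (\<integral>z. (cc \<tau> (fst p) (snd p) W z)^2 \<partial>\<mu>S) < dd + (1/4)^j"
  proof
    fix j :: nat
    have "Inf Vset < dd + (1/4)^j" unfolding dd_def by simp
    from cInf_lessD[OF Vset_ne this] obtain x where "x \<in> Vset" "x < dd + (1/4)^j" by blast
    then show "\<exists>p. cvx (fst p) (snd p) \<and> (\<integral>z. (cc \<tau> (fst p) (snd p) W z)^2 \<partial>\<mu>S) < dd + (1/4)^j"
      unfolding Vset_def by auto
  qed
  then obtain p where p1: "\<And>j. cvx (fst (p j)) (snd (p j))"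
    and p2: "\<And>j. (\<integral>z. (cc \<tau> (fst (p j)) (snd (p j)) W z)^2 \<partial>\<mu>S) < dd + (1/4)^j"
    by metis
  define \<phi> where "\<phi> j = cc \<tau> (fst (p j)) (snd (p j)) W" for j
  have \<phi>m[measurable]: "\<phi> j \<in> borel_measurable \<mu>S" for j unfolding \<phi>_def by measurable
  have \<phi>B: "z \<in> space \<mu>S \<Longrightarrow> \<bar>\<phi> j z\<bar> \<le> B" for j z unfolding \<phi>_def by (rule ccB[OF p1])
  have \<phi>AE: "AE z in \<mu>S. \<bar>\<phi> j z\<bar> \<le> B" for j using \<phi>B by (auto intro!: AE_I2)
  have \<phi>AE_all: "AE z in \<mu>S. \<forall>j. \<bar>\<phi> j z\<bar> \<le> B" using \<phi>AE by (simp add: AE_all_countable)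
  define q where "q j = (\<integral>z. (\<phi> j z)^2 \<partial>\<mu>S)" for j
  have q_up: "q j < dd + (1/4)^j" for j unfolding q_def \<phi>_def using p2 .
  have q_lo: "dd \<le> q j" for j unfolding q_def \<phi>_def by (rule dd_le[OF p1])

  have diff2: "(\<integral>z. (\<phi> (Suc j) z - \<phi> j z)^2 \<partial>\<mu>S) \<le> 4 * (1/4)^j" for j
  proof -
    have "(\<integral>z. (\<phi> (Suc j) z - \<phi> j z)^2 \<partial>\<mu>S) \<le> 2 * (q (Suc j) - dd) + 2 * (q j - dd)"
      unfolding q_def \<phi>_def by (rule close[OF p1 p1])
    also have "\<dots> \<le> 2 * (1/4)^(Suc j) + 2 * (1/4)^j" using q_up[of j] q_up[of "Suc j"] by simp
    also have "\<dots> \<le> 4 * (1/4)^j" by simp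
    finally show ?thesis .
  qed
  define D where "D j z = \<bar>\<phi> (Suc j) z - \<phi> j z\<bar>" for j z
  have Dm[measurable]: "D j \<in> borel_measurable \<mu>S" for j unfolding D_def by measurable
  have DAE: "AE z in \<mu>S. \<bar>D j z\<bar> \<le> 2 * B" for j
    using \<phi>AE[of j] \<phi>AE[of "Suc j"] unfolding D_def by eventually_elim auto
  have Dint: "integrable \<mu>S (D j)" for j by (rule bounded_meas_integrable[OF _ DAE]) measurable
  have diff1: "(\<integral>z. D j z \<partial>\<mu>S) \<le> 2 * (1/2)^j" for j
  proof -
    have "(\<integral>z. D j z * 1 \<partial>\<mu>S)^2 \<le> (\<integral>z. (D j z)^2 \<partial>\<mu>S) * (\<integral>z. 1^2 \<partial>\<mu>S)"
      by (rule integral_cauchy_schwarz) (use int_sqAE[OF Dm DAE] Dint in auto)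
    also have "(\<integral>z. (D j z)^2 \<partial>\<mu>S) = (\<integral>z. (\<phi> (Suc j) z - \<phi> j z)^2 \<partial>\<mu>S)"
      unfolding D_def by simp
    finally have "(\<integral>z. D j z \<partial>\<mu>S)^2 \<le> 4 * (1/4)^j" using diff2[of j] P.prob_space by simp
    also have "4 * (1/4)^j = (2 * (1/2::real)^j)^2"
      by (simp add: power_mult_distrib power2_eq_square power_mult_distrib[symmetric])
    finally show ?thesis by (rule power2_le_imp_le) simp
  qed
  have "(\<integral>\<^sup>+z. (\<Sum>j. ennreal (D j z)) \<partial>\<mu>S) = (\<Sum>j. \<integral>\<^sup>+z. ennreal (D j z) \<partial>\<mu>S)"
    by (rule nn_integral_suminf) measurable
  also have "\<dots> = (\<Sum>j. ennreal (\<integral>z. D j z \<partial>\<mu>S))"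
    by (intro arg_cong[where f=suminf] ext nn_integral_eq_integral[OF Dint]) (auto simp: D_def)
  also have "\<dots> \<le> (\<Sum>j. ennreal (2 * (1/2)^j))"
    by (rule suminf_le[OF _ summableI summableI]) (use diff1 in \<open>auto intro: ennreal_leI\<close>)
  also have "\<dots> = ennreal (\<Sum>j. 2 * (1/2)^j)"
    by (rule suminf_ennreal2) (auto intro!: summable_mult summable_geometric)
  finally have le4: "(\<integral>\<^sup>+z. (\<Sum>j. ennreal (D j z)) \<partial>\<mu>S) \<le> ennreal (\<Sum>j. 2 * (1/2::real)^j)" .
  have fin: "(\<integral>\<^sup>+z. (\<Sum>j. ennreal (D j z)) \<partial>\<mu>S) \<noteq> \<infinity>"
    using neq_top_trans[OF ennreal_neq_top le4] by simp
  have "AE z in \<mu>S. (\<Sum>j. ennreal (D j z)) \<noteq> \<infinity>" by (rule nn_integral_PInf_AE[OF _ fin]) measurable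
  then have conv: "AE z in \<mu>S. convergent (\<lambda>j. \<phi> j z)"
  proof eventually_elim
    case (elim z)
    have "summable (\<lambda>j. D j z)" by (rule summable_suminf_not_top) (use elim in \<open>auto simp: D_def\<close>)
    then show ?case unfolding D_def by (rule conv_of_summable_diff)
  qed
  define h where "h z = lim (\<lambda>j. \<phi> j z)" for z
  have hm[measurable]: "h \<in> borel_measurable \<mu>S" unfolding h_def by measurable
  have hlim: "AE z in \<mu>S. (\<lambda>j. \<phi> j z) \<longlonglongrightarrow> h z"
    using conv by eventually_elim (simp add: h_def convergent_LIMSEQ_iff)
  have hB: "AE z in \<mu>S. \<bar>h z\<bar> \<le> B"
    using hlim \<phi>AE_all
  proof eventually_elim
    case (elim z)
    show ?case by (rule LIMSEQ_le_const2[OF tendsto_rabs[OF elim(1)]]) (use elim(2) in auto)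
  qed
  have lim1: "q \<longlonglongrightarrow> (\<integral>z. (h z)^2 \<partial>\<mu>S)"
    unfolding q_def
  proof (rule dc_const[OF P.finite_measure_axioms, where C="B*B"])
    show "AE z in \<mu>S. (\<lambda>j. (\<phi> j z)^2) \<longlonglongrightarrow> (h z)^2"
      using hlim by eventually_elim (rule tendsto_power)
    show "AE z in \<mu>S. \<bar>(\<phi> j z)^2\<bar> \<le> B * B" for j
      using AE_prod_bound[OF \<phi>AE[of j] \<phi>AE[of j]] by (simp add: power2_eq_square)
  qed measurable

  have sh: "(\<integral>z. (\<phi> j (\<tau> z) - \<phi> j z)^2 \<partial>\<mu>S) \<le> 4 * (1/4)^j" for j
  proof -
    let ?c = "(\<lambda>k. if k = 0 then 0 else fst (p j) (k - 1))"
    have cs: "cvx ?c (Suc (snd (p j)))" by (rule cvx_shift(1)[OF p1])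
    have eq: "cc \<tau> ?c (Suc (snd (p j))) W z = \<phi> j (\<tau> z)" for z
      unfolding \<phi>_def by (rule cvx_shift(2)[OF p1])
    have "(\<integral>z. (\<phi> j (\<tau> z) - \<phi> j z)^2 \<partial>\<mu>S)
       \<le> 2 * ((\<integral>z. (\<phi> j (\<tau> z))^2 \<partial>\<mu>S) - dd) + 2 * (q j - dd)"
      using close[OF cs p1[of j]] unfolding eq q_def \<phi>_def .
    also have "(\<integral>z. (\<phi> j (\<tau> z))^2 \<partial>\<mu>S) = q j"
      unfolding q_def by (rule integral_tau[where g="\<lambda>z. (\<phi> j z)^2"]) measurable
    finally show ?thesis using q_up[of j] by simp
  qed
  have lim2: "(\<lambda>j. \<integral>z. (\<phi> j (\<tau> z) - \<phi> j z)^2 \<partial>\<mu>S) \<longlonglongrightarrow> (\<integral>z. (h (\<tau> z) - h z)^2 \<partial>\<mu>S)"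
  proof (rule dc_const[OF P.finite_measure_axioms, where C="(2*B)*(2*B)"])
    show "AE z in \<mu>S. (\<lambda>j. (\<phi> j (\<tau> z) - \<phi> j z)^2) \<longlonglongrightarrow> (h (\<tau> z) - h z)^2"
      using hlim AE_tau[OF hlim] by eventually_elim (intro tendsto_intros)
    show "AE z in \<mu>S. \<bar>(\<phi> j (\<tau> z) - \<phi> j z)^2\<bar> \<le> (2*B) * (2*B)" for j
    proof -
      have "AE z in \<mu>S. \<bar>\<phi> j (\<tau> z) - \<phi> j z\<bar> \<le> 2*B"
        using AE_tau[OF \<phi>AE[of j]] \<phi>AE[of j] by eventually_elim auto
      from AE_prod_bound[OF this this] show ?thesis by (simp add: power2_eq_square)
    qed
  qed measurable
  have le0: "(\<integral>z. (h (\<tau> z) - h z)^2 \<partial>\<mu>S) \<le> 0"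
  proof (rule LIMSEQ_le[OF lim2])
    show "(\<lambda>j. 4 * (1/4::real)^j) \<longlonglongrightarrow> 0"
      by (intro tendsto_mult_right_zero LIMSEQ_power_zero) simp
    show "\<exists>N. \<forall>n\<ge>N. (\<integral>z. (\<phi> n (\<tau> z) - \<phi> n z)^2 \<partial>\<mu>S) \<le> 4 * (1/4)^n"
      using sh by blast
  qed
  have hdiffB: "AE z in \<mu>S. \<bar>h (\<tau> z) - h z\<bar> \<le> 2*B"
    using AE_tau[OF hB] hB by eventually_elim auto
  have hdi: "integrable \<mu>S (\<lambda>z. (h (\<tau> z) - h z)^2)" by (rule int_sqAE[OF _ hdiffB]) measurable
  have ge0: "0 \<le> (\<integral>z. (h (\<tau> z) - h z)^2 \<partial>\<mu>S)" by (rule Bochner_Integration.integral_nonneg) (rule zero_le_power2)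
  have "(\<integral>z. (h (\<tau> z) - h z)^2 \<partial>\<mu>S) = 0" using le0 ge0 by (rule antisym)
  then have "AE z in \<mu>S. (h (\<tau> z) - h z)^2 = 0"
    using integral_nonneg_eq_0_iff_AE[OF hdi] by simp
  then have hinv: "AE z in \<mu>S. h (\<tau> z) = h z" by eventually_elim simp
  have hn: "AE z in \<mu>S. h ((\<tau>^^n) z) = h z" for n
  proof (induction n)
    case (Suc n)
    have "AE z in \<mu>S. h ((\<tau>^^n) (\<tau> z)) = h (\<tau> z)" by (rule AE_tau[OF Suc])
    then show ?case using hinv by eventually_elim (simp only: funpow_Suc_right o_apply)
  qed simp
  define h' where "h' z = lim (\<lambda>n. h ((\<tau>^^n) z))" for z
  have hnm: "(\<lambda>z. h ((\<tau>^^n) z)) \<in> borel_measurable \<mu>S" for n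
    by (rule measurable_compose[OF taun_meas hm])
  have h'm[measurable]: "h' \<in> borel_measurable \<mu>S" unfolding h'_def by (rule borel_measurable_lim_metric[OF hnm])
  have h'inv: "h' (\<tau> z) = h' z" for z
  proof -
    have "h' (\<tau> z) = lim (\<lambda>n. h ((\<tau>^^(Suc n)) z))" unfolding h'_def by (simp only: funpow_Suc_right o_apply)
    also have "\<dots> = h' z" unfolding h'_def by (rule lim_shift)
    finally show ?thesis .
  qed
  have h'I: "h' \<in> borel_measurable I" by (rule invariant_Inv_measurable[OF tau_sp h'm]) (rule h'inv)
  have h'h: "AE z in \<mu>S. h' z = h z"
  proof -
    have "AE z in \<mu>S. \<forall>n. h ((\<tau>^^n) z) = h z" unfolding AE_all_countable by (rule allI) (rule hn)
    then show ?thesis by eventually_elim (simp add: h'_def)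
  qed
  have h'B: "AE z in \<mu>S. \<bar>h' z\<bar> \<le> B" using h'h hB by eventually_elim simp
  have WB': "AE z in \<mu>S. \<bar>W z\<bar> \<le> B" using WB by (auto intro!: AE_I2)
  have WhI: "(\<integral>z. W z * h z \<partial>\<mu>S) = 0"
  proof -
    have e1: "AE z in \<mu>S. W z * h z = h' z * W z" using h'h by eventually_elim simp
    have e2: "AE z in \<mu>S. h' z * PE W z = 0" using PW by eventually_elim simp
    have "(\<integral>z. W z * h z \<partial>\<mu>S) = (\<integral>z. h' z * W z \<partial>\<mu>S)"
      by (rule integral_cong_AE[OF _ _ e1]) measurable
    also have "\<dots> = (\<integral>z. h' z * PE W z \<partial>\<mu>S)"
      by (rule I.real_cond_exp_intg(2)[symmetric]) (use int_prodAE[OF h'm Wm h'B WB'] h'I in auto)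
    also have "\<dots> = (\<integral>z. 0 \<partial>\<mu>S)"
      by (rule integral_cong_AE[OF _ _ e2]) measurable
    finally show ?thesis by simp
  qed
  have Wh_j: "(\<integral>z. \<phi> j z * h z \<partial>\<mu>S) = 0" for j
  proof -
    let ?c = "fst (p j)" and ?K = "snd (p j)"
    have ik: "integrable \<mu>S (\<lambda>z. W ((\<tau>^^k) z) * h z)" for k
      by (rule int_prodAE[OF _ hm AE_taun[OF WB'] hB]) measurable
    have ek: "(\<integral>z. W ((\<tau>^^k) z) * h z \<partial>\<mu>S) = 0" for k
    proof -
      have e3: "AE z in \<mu>S. W ((\<tau>^^k) z) * h z = (\<lambda>z. W z * h z) ((\<tau>^^k) z)"
        using hn[of k] by eventually_elim simp
      have "(\<integral>z. W ((\<tau>^^k) z) * h z \<partial>\<mu>S) = (\<integral>z. (\<lambda>z. W z * h z) ((\<tau>^^k) z) \<partial>\<mu>S)"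
        by (rule integral_cong_AE[OF _ _ e3]) measurable
      also have "\<dots> = (\<integral>z. W z * h z \<partial>\<mu>S)" by (rule integral_taun) measurable
      finally show ?thesis using WhI by simp
    qed
    have "(\<integral>z. \<phi> j z * h z \<partial>\<mu>S) = (\<integral>z. (\<Sum>k<?K. ?c k * (W ((\<tau>^^k) z) * h z)) \<partial>\<mu>S)"
      unfolding \<phi>_def cc_def by (simp add: sum_distrib_right mult.assoc)
    also have "\<dots> = (\<Sum>k<?K. ?c k * (\<integral>z. W ((\<tau>^^k) z) * h z \<partial>\<mu>S))"
      using ik by (simp add: Bochner_Integration.integral_sum)
    also have "\<dots> = 0" by (simp add: ek)
    finally show ?thesis .
  qed
  have lim3: "(\<lambda>j. \<integral>z. \<phi> j z * h z \<partial>\<mu>S) \<longlonglongrightarrow> (\<integral>z. h z * h z \<partial>\<mu>S)"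
  proof (rule dc_const[OF P.finite_measure_axioms, where C="B*B"])
    show "AE z in \<mu>S. (\<lambda>j. \<phi> j z * h z) \<longlonglongrightarrow> h z * h z"
      using hlim by eventually_elim (intro tendsto_intros)
    show "AE z in \<mu>S. \<bar>\<phi> j z * h z\<bar> \<le> B * B" for j by (rule AE_prod_bound[OF \<phi>AE hB])
  qed measurable
  have "(\<integral>z. h z * h z \<partial>\<mu>S) = 0"
    using lim3 unfolding Wh_j by (simp add: LIMSEQ_const_iff)
  then have "q \<longlonglongrightarrow> 0" using lim1 by (simp add: power2_eq_square)
  from order_tendstoD(2)[OF this eps] obtain j where "q j < \<epsilon>"
    by (auto simp: eventually_sequentially)
  then show ?thesis using p1[of j] unfolding q_def \<phi>_def by blast
qed

end
end


lemma zero_aux: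
  fixes X C :: real and A Bf :: "(nat \<Rightarrow> real) \<Rightarrow> nat \<Rightarrow> real"
  assumes small: "\<And>\<epsilon>. 0 < \<epsilon> \<Longrightarrow> \<exists>c K. cvx c K \<and> A c K < \<epsilon>"
    and bnd: "\<And>c K. cvx c K \<Longrightarrow> Bf c K \<le> C"
    and key: "\<And>c K. cvx c K \<Longrightarrow> X \<le> sqrt (A c K) * sqrt (Bf c K)"
    and A0: "\<And>c K. 0 \<le> A c K" and B0: "\<And>c K. 0 \<le> Bf c K" and X0: "0 \<le> X" and C0: "0 \<le> C"
  shows "X = 0"
proof (rule ccontr)
  assume "X \<noteq> 0"
  then have Xp: "0 < X" using X0 by simp
  have sc: "0 < sqrt C + 1" using C0 by (simp add: add_nonneg_pos)
  define \<epsilon> where "\<epsilon> = (X / (sqrt C + 1))^2"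
  have ep: "0 < \<epsilon>" unfolding \<epsilon>_def using Xp sc by simp
  obtain c K where cK: "cvx c K" "A c K < \<epsilon>" using small[OF ep] by blast
  have "sqrt (A c K) \<le> X / (sqrt C + 1)"
  proof -
    have "sqrt (A c K) \<le> sqrt \<epsilon>" using cK(2) by simp
    also have "sqrt \<epsilon> = X / (sqrt C + 1)" unfolding \<epsilon>_def using Xp sc by simp
    finally show ?thesis .
  qed
  moreover have "sqrt (Bf c K) \<le> sqrt C" using bnd[OF cK(1)] by simp
  ultimately have "sqrt (A c K) * sqrt (Bf c K) \<le> X / (sqrt C + 1) * sqrt C"
    by (intro mult_mono) (use Xp sc B0 in auto)
  also have "\<dots> < X" using Xp sc by (simp add: field_simps)
  finally show False using key[OF cK(1)] by simp
qed

context sys begin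

lemma bdd_bound_pos: assumes "bdd_meas M u" obtains B where "0 \<le> B" "\<And>x. x \<in> space M \<Longrightarrow> \<bar>u x\<bar> \<le> B"
  using bdd_meas_bound[OF assms] by blast

lemma tensor_bound: assumes "\<And>x. x \<in> space M \<Longrightarrow> \<bar>u x\<bar> \<le> A" "\<And>x. x \<in> space M \<Longrightarrow> \<bar>v x\<bar> \<le> B" "0 \<le> A"
  shows "z \<in> space \<mu>S \<Longrightarrow> \<bar>tensor u v z\<bar> \<le> A * B"
  unfolding tensor_def abs_mult using assms
  by (intro mult_mono) (auto simp: space_muS mem_Times_iff)

lemma key_ineq:
  assumes u: "bdd_meas M u" and v: "bdd_meas M v" and c: "cvx c K"
  shows "(\<integral>z. (PE (tensor u v) z)^2 \<partial>\<mu>S)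
    \<le> sqrt (\<integral>z. (cc \<tau> c K (tensor u u) z)^2 \<partial>\<mu>S) * sqrt (\<integral>z. (cc \<tau> c K (tensor v v) z)^2 \<partial>\<mu>S)"
proof -
  obtain A where A: "0 \<le> A" "\<And>x. x \<in> space M \<Longrightarrow> \<bar>u x\<bar> \<le> A" using bdd_bound_pos[OF u] by blast
  obtain B where B: "0 \<le> B" "\<And>x. x \<in> space M \<Longrightarrow> \<bar>v x\<bar> \<le> B" using bdd_bound_pos[OF v] by blast
  have [measurable]: "u \<in> borel_measurable M" "v \<in> borel_measurable M" using u v by (auto simp: bdd_meas_def)
  have "(\<integral>z. (PE (tensor u v) z)^2 \<partial>\<mu>S) \<le> (\<integral>z. (cc \<tau> c K (tensor u v) z)^2 \<partial>\<mu>S)"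
    by (rule F1[OF _ tensor_bound[OF A(2) B(2) A(1)] c]) measurable
  also have "\<dots> \<le> sqrt (\<integral>z. (cc \<tau> c K (tensor u u) z)^2 \<partial>\<mu>S) * sqrt (\<integral>z. (cc \<tau> c K (tensor v v) z)^2 \<partial>\<mu>S)"
    by (rule F2[OF u v c])
  finally show ?thesis .
qed

lemma V_bound:
  assumes v: "bdd_meas M v" and B: "0 \<le> B" "\<And>x. x \<in> space M \<Longrightarrow> \<bar>v x\<bar> \<le> B" and c: "cvx c K"
  shows "(\<integral>z. (cc \<tau> c K (tensor v v) z)^2 \<partial>\<mu>S) \<le> (B*B)^2"
proof -
  have [measurable]: "v \<in> borel_measurable M" using v by (auto simp: bdd_meas_def)
  have b: "z \<in> space \<mu>S \<Longrightarrow> \<bar>cc \<tau> c K (tensor v v) z\<bar> \<le> B * B" for z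
    by (rule cc_bound[OF tensor_bound[OF B(2) B(2) B(1)] c])
  have "(\<integral>z. (cc \<tau> c K (tensor v v) z)^2 \<partial>\<mu>S) \<le> (\<integral>z. (B*B)^2 \<partial>\<mu>S)"
  proof (rule integral_mono)
    show "integrable \<mu>S (\<lambda>z. (cc \<tau> c K (tensor v v) z)^2)"
    proof -
      have bAE: "AE z in \<mu>S. \<bar>cc \<tau> c K (tensor v v) z\<bar> \<le> B * B" using b by (auto intro!: AE_I2)
      show ?thesis using bounded_meas_integrable[OF _ AE_prod_bound[OF bAE bAE]] by (simp add: power2_eq_square)
    qed
    show "(cc \<tau> c K (tensor v v) z)^2 \<le> (B*B)^2" if "z \<in> space \<mu>S" for z
      using b[OF that] by (simp add: abs_le_square_iff[symmetric])
  qed simp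
  then show ?thesis using P.prob_space by simp
qed

lemma zero_of_sq:
  assumes u: "bdd_meas M u" and v: "bdd_meas M v" and Pu: "AE z in \<mu>S. PE (tensor u u) z = 0"
  shows "AE z in \<mu>S. PE (tensor u v) z = 0" "AE z in \<mu>S. PE (tensor v u) z = 0"
proof -
  obtain A where A: "0 \<le> A" "\<And>x. x \<in> space M \<Longrightarrow> \<bar>u x\<bar> \<le> A" using bdd_bound_pos[OF u] by blast
  obtain B where B: "0 \<le> B" "\<And>x. x \<in> space M \<Longrightarrow> \<bar>v x\<bar> \<le> B" using bdd_bound_pos[OF v] by blast
  have [measurable]: "u \<in> borel_measurable M" "v \<in> borel_measurable M" using u v by (auto simp: bdd_meas_def)
  have small: "\<exists>c K. cvx c K \<and> (\<integral>z. (cc \<tau> c K (tensor u u) z)^2 \<partial>\<mu>S) < \<epsilon>" if "0 < \<epsilon>" for \<epsilon>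
    by (rule mean_erg[OF _ tensor_bound[OF A(2) A(2) A(1)] Pu that]) measurable
  have fin: "AE z in \<mu>S. PE (tensor a b) z = 0"
    if ab: "bdd_meas M a" "bdd_meas M b" and X0: "(\<integral>z. (PE (tensor a b) z)^2 \<partial>\<mu>S) = 0" for a b
  proof -
    obtain C where C: "0 \<le> C" "\<And>x. x \<in> space M \<Longrightarrow> \<bar>a x\<bar> \<le> C" using bdd_bound_pos[OF ab(1)] by blast
    obtain D where D: "0 \<le> D" "\<And>x. x \<in> space M \<Longrightarrow> \<bar>b x\<bar> \<le> D" using bdd_bound_pos[OF ab(2)] by blast
    have [measurable]: "a \<in> borel_measurable M" "b \<in> borel_measurable M" using ab by (auto simp: bdd_meas_def)
    have PB: "AE z in \<mu>S. \<bar>PE (tensor a b) z\<bar> \<le> C * D"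
      by (rule PE_bound[OF _ tensor_bound[OF C(2) D(2) C(1)]]) measurable
    have "integrable \<mu>S (\<lambda>z. (PE (tensor a b) z)^2)"
      using bounded_meas_integrable[OF _ AE_prod_bound[OF PB PB]] by (simp add: power2_eq_square)
    then have "AE z in \<mu>S. (PE (tensor a b) z)^2 = 0"
      using integral_nonneg_eq_0_iff_AE[of \<mu>S "\<lambda>z. (PE (tensor a b) z)^2"] X0 by simp
    then show ?thesis by eventually_elim simp
  qed
  show "AE z in \<mu>S. PE (tensor u v) z = 0"
  proof (rule fin[OF u v])
    show "(\<integral>z. (PE (tensor u v) z)^2 \<partial>\<mu>S) = 0"
    proof (rule zero_aux[where A="\<lambda>c K. \<integral>z. (cc \<tau> c K (tensor u u) z)^2 \<partial>\<mu>S"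
          and Bf="\<lambda>c K. \<integral>z. (cc \<tau> c K (tensor v v) z)^2 \<partial>\<mu>S" and C="(B*B)^2"])
      show "\<And>\<epsilon>. 0 < \<epsilon> \<Longrightarrow> \<exists>c K. cvx c K \<and> (\<integral>z. (cc \<tau> c K (tensor u u) z)^2 \<partial>\<mu>S) < \<epsilon>" by (rule small)
      show "\<And>c K. cvx c K \<Longrightarrow> (\<integral>z. (cc \<tau> c K (tensor v v) z)^2 \<partial>\<mu>S) \<le> (B*B)^2" by (rule V_bound[OF v B])
      show "\<And>c K. cvx c K \<Longrightarrow> (\<integral>z. (PE (tensor u v) z)^2 \<partial>\<mu>S) \<le> sqrt (\<integral>z. (cc \<tau> c K (tensor u u) z)^2 \<partial>\<mu>S) * sqrt (\<integral>z. (cc \<tau> c K (tensor v v) z)^2 \<partial>\<mu>S)"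
        by (rule key_ineq[OF u v])
    qed auto
  qed
  show "AE z in \<mu>S. PE (tensor v u) z = 0"
  proof (rule fin[OF v u])
    show "(\<integral>z. (PE (tensor v u) z)^2 \<partial>\<mu>S) = 0"
    proof (rule zero_aux[where A="\<lambda>c K. \<integral>z. (cc \<tau> c K (tensor u u) z)^2 \<partial>\<mu>S"
          and Bf="\<lambda>c K. \<integral>z. (cc \<tau> c K (tensor v v) z)^2 \<partial>\<mu>S" and C="(B*B)^2"])
      show "\<And>\<epsilon>. 0 < \<epsilon> \<Longrightarrow> \<exists>c K. cvx c K \<and> (\<integral>z. (cc \<tau> c K (tensor u u) z)^2 \<partial>\<mu>S) < \<epsilon>" by (rule small)
      show "\<And>c K. cvx c K \<Longrightarrow> (\<integral>z. (cc \<tau> c K (tensor v v) z)^2 \<partial>\<mu>S) \<le> (B*B)^2" by (rule V_bound[OF v B])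
      show "(\<integral>z. (PE (tensor v u) z)^2 \<partial>\<mu>S) \<le> sqrt (\<integral>z. (cc \<tau> c K (tensor u u) z)^2 \<partial>\<mu>S) * sqrt (\<integral>z. (cc \<tau> c K (tensor v v) z)^2 \<partial>\<mu>S)"
        if "cvx c K" for c K
        using key_ineq[OF v u that] by (simp add: mult.commute)
    qed auto
  qed
qed

end


lemma sets_Wjoin: "sets (Wjoin M S T) = sigma_sets (space M) (inv_sets M S \<union> inv_sets M T)"
  unfolding Wjoin_def inv_sets_def
  by (rule sets_measure_of) (auto dest: sets.sets_into_space)

lemma space_Wjoin: "space (Wjoin M S T) = space M"
  unfolding Wjoin_def inv_sets_def
  by (rule space_measure_of) (auto dest: sets.sets_into_space)

lemma subalg_Wjoin: "subalgebra M (Wjoin M S T)"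
  unfolding subalgebra_def sets_Wjoin space_Wjoin
  by (auto intro!: sets.sigma_sets_subset simp: inv_sets_def)

context sys begin

abbreviation "Wj \<equiv> Wjoin M S T"
abbreviation "EW \<equiv> real_cond_exp M Wj"

sublocale W: sigma_finite_subalgebra M Wj
  by (rule finite_measure_subalgebra_is_sigma_finite)
     (simp add: finite_measure_subalgebra_def finite_measure_subalgebra_axioms_def M.finite_measure_axioms subalg_Wjoin)

lemma bdd_int: "bdd_meas M f \<Longrightarrow> integrable M f"
  unfolding bdd_meas_def
  by (auto intro!: integrable_AE_bounded[OF M.finite_measure_axioms] AE_I2)

lemma E_null: assumes "N \<in> null_sets M" shows "AE x in M. E (indicator N) x = 0"
proof -
  have N[measurable]: "N \<in> sets M" using assms by auto
  have "AE x in M. indicator N x = (0::real)" using AE_not_in[OF assms] by eventually_elim simp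
  then have "AE x in M. E (indicator N) x = E (\<lambda>_. 0) x"
    by (intro J.real_cond_exp_cong) auto
  moreover have "AE x in M. E (\<lambda>_. 0) x = 0" by (rule J.real_cond_exp_F_meas) auto
  ultimately show ?thesis by eventually_elim simp
qed

lemma AE_fst: assumes "AE x in M. Q x" shows "AE z in \<mu>S. Q (fst z)"
proof -
  obtain N where N: "{x \<in> space M. \<not> Q x} \<subseteq> N" "emeasure M N = 0" "N \<in> sets M"
    using assms by (auto elim!: AE_E)
  have Nn: "N \<in> null_sets M" using N by auto
  have "emeasure \<mu>S (N \<times> space M) = ennreal (\<integral>x. E (indicator N) x * E (indicator (space M)) x \<partial>M)"
    by (rule rect) (use N in auto)
  also have "(\<integral>x. E (indicator N) x * E (indicator (space M)) x \<partial>M) = (\<integral>x. 0 \<partial>M)"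
  proof (rule integral_cong_AE)
    show "AE x in M. E (indicator N) x * E (indicator (space M)) x = 0"
      using E_null[OF Nn] by eventually_elim simp
  qed auto
  finally have "N \<times> space M \<in> null_sets \<mu>S" using N by (auto simp: null_sets_def sets_muS)
  from AE_not_in[OF this] show ?thesis
    by (rule AE_mp) (use N in \<open>auto intro!: AE_I2 simp: space_muS\<close>)
qed

lemma AE_snd: assumes "AE x in M. Q x" shows "AE z in \<mu>S. Q (snd z)"
proof -
  obtain N where N: "{x \<in> space M. \<not> Q x} \<subseteq> N" "emeasure M N = 0" "N \<in> sets M"
    using assms by (auto elim!: AE_E)
  have Nn: "N \<in> null_sets M" using N by auto
  have "emeasure \<mu>S (space M \<times> N) = ennreal (\<integral>x. E (indicator (space M)) x * E (indicator N) x \<partial>M)"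
    by (rule rect) (use N in auto)
  also have "(\<integral>x. E (indicator (space M)) x * E (indicator N) x \<partial>M) = (\<integral>x. 0 \<partial>M)"
  proof (rule integral_cong_AE)
    show "AE x in M. E (indicator (space M)) x * E (indicator N) x = 0"
      using E_null[OF Nn] by eventually_elim simp
  qed auto
  finally have "space M \<times> N \<in> null_sets \<mu>S" using N by (auto simp: null_sets_def sets_muS)
  from AE_not_in[OF this] show ?thesis
    by (rule AE_mp) (use N in \<open>auto intro!: AE_I2 simp: space_muS\<close>)
qed

lemma sq_zero_AE:
  assumes ab: "bdd_meas M a" "bdd_meas M b" and X0: "(\<integral>z. (PE (tensor a b) z)^2 \<partial>\<mu>S) = 0"
  shows "AE z in \<mu>S. PE (tensor a b) z = 0"
proof -
  obtain C where C: "0 \<le> C" "\<And>x. x \<in> space M \<Longrightarrow> \<bar>a x\<bar> \<le> C" using bdd_bound_pos[OF ab(1)] by blast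
  obtain D where D: "0 \<le> D" "\<And>x. x \<in> space M \<Longrightarrow> \<bar>b x\<bar> \<le> D" using bdd_bound_pos[OF ab(2)] by blast
  have [measurable]: "a \<in> borel_measurable M" "b \<in> borel_measurable M" using ab by (auto simp: bdd_meas_def)
  have PB: "AE z in \<mu>S. \<bar>PE (tensor a b) z\<bar> \<le> C * D"
    by (rule PE_bound[OF _ tensor_bound[OF C(2) D(2) C(1)]]) measurable
  have "integrable \<mu>S (\<lambda>z. (PE (tensor a b) z)^2)"
    using bounded_meas_integrable[OF _ AE_prod_bound[OF PB PB]] by (simp add: power2_eq_square)
  then have "AE z in \<mu>S. (PE (tensor a b) z)^2 = 0"
    using integral_nonneg_eq_0_iff_AE[of \<mu>S "\<lambda>z. (PE (tensor a b) z)^2"] X0 by simp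
  then show ?thesis by eventually_elim simp
qed

lemma magic_sq:
  assumes mg: "magic M S T" and g: "bdd_meas M g" and Eg: "AE x in M. EW g x = 0"
  shows "AE z in \<mu>S. PE (tensor g g) z = 0"
proof -
  have "seminorm4 M T \<mu>S g = 0" using mg muS g Eg unfolding magic_def by blast
  then have "(\<integral>z. (PE (tensor g g) z)^2 \<partial>\<mu>S) = 0" by (simp add: seminorm4_def)
  then show ?thesis by (rule sq_zero_AE[OF g g])
qed

lemma clip:
  assumes f: "bdd_meas M f"
  obtains hh g where "bdd_meas M hh" "bdd_meas M g" "AE x in M. hh x = EW f x"
    "\<And>x. f x = hh x + g x" "AE x in M. EW g x = 0"
proof -
  obtain B where B: "0 \<le> B" "\<And>x. x \<in> space M \<Longrightarrow> \<bar>f x\<bar> \<le> B" using bdd_bound_pos[OF f] by blast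
  have fm[measurable]: "f \<in> borel_measurable M" using f by (auto simp: bdd_meas_def)
  define hh where "hh x = max (-B) (min B (EW f x))" for x
  define g where "g x = f x - hh x" for x
  have hhW[measurable]: "hh \<in> borel_measurable Wj" unfolding hh_def by measurable
  have hhM[measurable]: "hh \<in> borel_measurable M" unfolding hh_def by measurable
  have hhB: "\<bar>hh x\<bar> \<le> B" for x unfolding hh_def using B(1) by auto
  have h1: "bdd_meas M hh" using hhB by (auto simp: bdd_meas_def)
  have h2: "bdd_meas M g" unfolding bdd_meas_def g_def
    using B(2) hhB by (auto intro!: exI[of _ "B + B"] abs_triangle_ineq4[THEN order_trans] add_mono)
  have EB: "AE x in M. \<bar>EW f x\<bar> \<le> B"
    by (rule cexp_bound[OF M.finite_measure_axioms W.sigma_finite_subalgebra_axioms fm B(2)])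
  have h3: "AE x in M. hh x = EW f x" using EB by eventually_elim (auto simp: hh_def)
  have h4: "f x = hh x + g x" for x by (simp add: g_def)
  have "AE x in M. EW g x = EW f x - EW hh x"
    unfolding g_def by (rule W.real_cond_exp_diff) (use bdd_int[OF f] bdd_int[OF h1] in auto)
  moreover have "AE x in M. EW hh x = hh x" by (rule W.real_cond_exp_F_meas) (use bdd_int[OF h1] in auto)
  ultimately have h5: "AE x in M. EW g x = 0" using h3 by eventually_elim simp
  show ?thesis by (rule that[OF h1 h2 h3 h4 h5])
qed

lemma main:
  assumes mg: "magic M S T" and f0: "bdd_meas M f0" and f1: "bdd_meas M f1"
  shows "AE z in \<mu>S. PE (tensor f0 f1) z = PE (tensor (EW f0) (EW f1)) z"
proof -
  obtain h0 g0 where h0: "bdd_meas M h0" and g0: "bdd_meas M g0" and e0: "AE x in M. h0 x = EW f0 x"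
    and d0: "\<And>x. f0 x = h0 x + g0 x" and z0: "AE x in M. EW g0 x = 0" by (rule clip[OF f0]) blast
  obtain h1 g1 where h1: "bdd_meas M h1" and g1: "bdd_meas M g1" and e1: "AE x in M. h1 x = EW f1 x"
    and d1: "\<And>x. f1 x = h1 x + g1 x" and z1: "AE x in M. EW g1 x = 0" by (rule clip[OF f1]) blast
  have Z1: "AE z in \<mu>S. PE (tensor g0 f1) z = 0"
    by (rule zero_of_sq(1)[OF g0 f1 magic_sq[OF mg g0 z0]])
  have Z2: "AE z in \<mu>S. PE (tensor h0 g1) z = 0"
    by (rule zero_of_sq(2)[OF g1 h0 magic_sq[OF mg g1 z1]])
  have eqf: "tensor f0 f1 = (\<lambda>z. tensor h0 h1 z + (tensor g0 f1 z + tensor h0 g1 z))"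
    by (rule ext) (simp add: tensor_def d0 d1 algebra_simps)
  have i1: "integrable \<mu>S (tensor h0 h1)" by (rule tensor_bdd_int[OF h0 h1])
  have i2: "integrable \<mu>S (tensor g0 f1)" by (rule tensor_bdd_int[OF g0 f1])
  have i3: "integrable \<mu>S (tensor h0 g1)" by (rule tensor_bdd_int[OF h0 g1])
  have A1: "AE z in \<mu>S. PE (\<lambda>z. tensor h0 h1 z + (tensor g0 f1 z + tensor h0 g1 z)) z
      = PE (tensor h0 h1) z + PE (\<lambda>z. tensor g0 f1 z + tensor h0 g1 z) z"
    by (rule I.real_cond_exp_add) (use i1 i2 i3 in auto)
  have A2: "AE z in \<mu>S. PE (\<lambda>z. tensor g0 f1 z + tensor h0 g1 z) z = PE (tensor g0 f1) z + PE (tensor h0 g1) z"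
    by (rule I.real_cond_exp_add) (use i2 i3 in auto)
  have [measurable]: "h0 \<in> borel_measurable M" "h1 \<in> borel_measurable M" using h0 h1 by (auto simp: bdd_meas_def)
  have C: "AE z in \<mu>S. PE (tensor h0 h1) z = PE (tensor (EW f0) (EW f1)) z"
  proof (rule I.real_cond_exp_cong)
    show "AE z in \<mu>S. tensor h0 h1 z = tensor (EW f0) (EW f1) z"
      using AE_fst[OF e0] AE_snd[OF e1] by eventually_elim (simp add: tensor_def)
  qed measurable
  show ?thesis unfolding eqf using A1 A2 Z1 Z2 C by eventually_elim simp
qed

end

theorem lemma3p4:
  fixes M :: "'a measure" and S T :: "'a \<Rightarrow> 'a" and \<mu>S :: "('a \<times> 'a) measure"
  assumes "comm_system M S T" and "free M S T" and "magic M S T" and "ergodic2 M S T"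
    and "is_muS M S \<mu>S"
    and "bdd_meas M f0" and "bdd_meas M f1"
  shows "AE z in \<mu>S.
     real_cond_exp \<mu>S (Inv \<mu>S (map_prod T T)) (tensor f0 f1) z
   = real_cond_exp \<mu>S (Inv \<mu>S (map_prod T T))
       (tensor (real_cond_exp M (Wjoin M S T) f0) (real_cond_exp M (Wjoin M S T) f1)) z"
proof -
  interpret sys M S T \<mu>S using assms(1,5) by (simp add: sys_def)
  show ?thesis by (rule main[OF assms(3,6,7)])
qed


end
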